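(* Let $f:\mathbb{R}^d\to\mathbb{R}$ be $\beta$-smooth with minimum value $f^\star$, and run AdaSGD (as defined in the context) for $T$ steps with parameters $\eta,\gamma>0$ using a stochastic gradient oracle with bounded affine noise with parameters $\sigma_0,\sigma_1\ge0$. Let $\delta\in(0,1)$. Then with probability at least $1-2\delta$, for all $1\le t\le T$, $$\sum_{s=1}^t\eta_{s-1}^2\|\nabla f(w_s)-g_s\|^2\le2\eta^2\log\big(1+\sigma^2T/(2\gamma^2)\big)+7\eta_0^2\sigma^2\log(T/\delta),$$ where $\sigma^2=\sigma_0^2+2\beta\sigma_1^2F$, with $\Delta_1=f(w_1)-f^\star$, $C_1=\log\big(1+\frac{2\sigma_0^2T+8(1+\sigma_1^2)(\eta^2\beta^2T^3+\beta\Delta_1T)}{\gamma^2}\big)$ and $F=2\Delta_1+(3\log\frac T\delta+4C_1)\eta\sigma_0+(9\log^2\frac T\delta+16C_1^2)\eta^2\beta\sigma_1^2+\eta^2\beta C_1$.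
   Context: $\|\cdot\|$ is the Euclidean norm and $\log$ the base-2 logarithm. $\beta$-smooth: $\|\nabla f(x)-\nabla f(y)\|\le\beta\|x-y\|$. Oracle: queried at $w$, returns random $g(w)$ with $\mathbb{E}[g(w)\mid w]=\nabla f(w)$ and, with probability one, $\|g(w)-\nabla f(w)\|^2\le\sigma_0^2+\sigma_1^2\|\nabla f(w)\|^2$. AdaSGD: arbitrary $w_1$; for $t=1,\dots,T$, $g_t=g(w_t)$ a fresh oracle answer ($\mathbb{E}[g_t\mid g_1,\dots,g_{t-1}]=\nabla f(w_t)$), $\eta_t=\eta/\sqrt{\gamma^2+\sum_{s=1}^t\|g_s\|^2}$ (so $\eta_0=\eta/\gamma$), $w_{t+1}=w_t-\eta_tg_t$. *)

theory Defs
  imports "HOL-Probability.Probability"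
begin

text \<open>AdaSGD. The oracle answers are random vectors g t (t = 1, 2, ...) on a
probability space; everything else is a deterministic function of them.\<close>

definition ada_eta :: "real \<Rightarrow> real \<Rightarrow> (nat \<Rightarrow> 'b \<Rightarrow> 'a::euclidean_space) \<Rightarrow> nat \<Rightarrow> 'b \<Rightarrow> real" where
  "ada_eta \<eta> \<gamma> g t \<omega> = \<eta> / sqrt (\<gamma>\<^sup>2 + (\<Sum>s=1..t. (norm (g s \<omega>))\<^sup>2))"

text \<open>Iterates: ada_w ... t is w_t for t \<ge> 1 (index 0 is unused and set to w_1).\<close>
fun ada_w :: "real \<Rightarrow> real \<Rightarrow> 'a::euclidean_space \<Rightarrow> (nat \<Rightarrow> 'b \<Rightarrow> 'a) \<Rightarrow> nat \<Rightarrow> 'b \<Rightarrow> 'a" where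
  "ada_w \<eta> \<gamma> w1 g 0 \<omega> = w1"
| "ada_w \<eta> \<gamma> w1 g (Suc 0) \<omega> = w1"
| "ada_w \<eta> \<gamma> w1 g (Suc (Suc t)) \<omega> =
     ada_w \<eta> \<gamma> w1 g (Suc t) \<omega> - ada_eta \<eta> \<gamma> g (Suc t) \<omega> *\<^sub>R g (Suc t) \<omega>"

definition hist :: "'b measure \<Rightarrow> (nat \<Rightarrow> 'b \<Rightarrow> 'a::euclidean_space) \<Rightarrow> nat \<Rightarrow> 'b measure" where
  "hist M g t = sigma (space M) (\<Union>s\<in>{1..<t}. {g s -` A \<inter> space M | A. A \<in> sets borel})"

end

theory Submission
  imports Defs
begin



lemma descent_lemma:
  fixes f :: "'a::euclidean_space \<Rightarrow> real" and grad :: "'a \<Rightarrow> 'a"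
  assumes grad: "\<And>x. (f has_derivative (\<lambda>h. grad x \<bullet> h)) (at x)"
    and smooth: "\<And>x y. norm (grad x - grad y) \<le> \<beta> * norm (x - y)"
  shows "f y \<le> f x + grad x \<bullet> (y - x) + \<beta> / 2 * (norm (y - x))\<^sup>2"
proof -
  define d where "d = y - x"
  define \<psi> where "\<psi> = (\<lambda>\<tau>::real. f (x + \<tau> *\<^sub>R d) - \<tau> * (grad x \<bullet> d) - \<beta> / 2 * \<tau>\<^sup>2 * (norm d)\<^sup>2)"
  have der: "DERIV \<psi> \<tau> :> (grad (x + \<tau> *\<^sub>R d) \<bullet> d - grad x \<bullet> d - \<beta> * \<tau> * (norm d)\<^sup>2)" for \<tau>
  proof -
    have "((\<lambda>\<tau>. x + \<tau> *\<^sub>R d) has_derivative (\<lambda>h. h *\<^sub>R d)) (at \<tau>)"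
      by (auto intro!: derivative_eq_intros)
    from has_derivative_compose[OF this grad]
    have "((\<lambda>\<tau>. f (x + \<tau> *\<^sub>R d)) has_derivative (\<lambda>h. grad (x + \<tau> *\<^sub>R d) \<bullet> (h *\<^sub>R d))) (at \<tau>)" .
    then have "((\<lambda>\<tau>. f (x + \<tau> *\<^sub>R d)) has_real_derivative (grad (x + \<tau> *\<^sub>R d) \<bullet> d)) (at \<tau>)"
    proof -
      have "(\<lambda>h. grad (x + \<tau> *\<^sub>R d) \<bullet> (h *\<^sub>R d)) = (*) (grad (x + \<tau> *\<^sub>R d) \<bullet> d)"
        by (auto simp: fun_eq_iff)
      then show ?thesis using \<open>((\<lambda>\<tau>. f (x + \<tau> *\<^sub>R d)) has_derivative _) _\<close> by (simp add: has_field_derivative_def)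
    qed
    then show ?thesis unfolding \<psi>_def
      by (auto intro!: derivative_eq_intros simp: power2_eq_square)
  qed
  have "\<psi> 1 \<le> \<psi> 0"
  proof (rule DERIV_nonpos_imp_nonincreasing[of 0 1])
    fix \<tau> :: real assume "0 \<le> \<tau>" "\<tau> \<le> 1"
    have "grad (x + \<tau> *\<^sub>R d) \<bullet> d - grad x \<bullet> d = (grad (x + \<tau> *\<^sub>R d) - grad x) \<bullet> d"
      by (simp add: inner_diff_left)
    also have "\<dots> \<le> norm (grad (x + \<tau> *\<^sub>R d) - grad x) * norm d"
      by (rule Cauchy_Schwarz_ineq2[THEN order_trans[OF abs_ge_self]])
    also have "\<dots> \<le> \<beta> * norm (\<tau> *\<^sub>R d) * norm d"
      using smooth[of "x + \<tau> *\<^sub>R d" x] by (intro mult_right_mono) auto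
    also have "\<dots> = \<beta> * \<tau> * (norm d)\<^sup>2" using \<open>0 \<le> \<tau>\<close> by (simp add: power2_eq_square)
    finally show "\<exists>y. DERIV \<psi> \<tau> :> y \<and> y \<le> 0" using der[of \<tau>] by (intro exI[of _ "grad (x + \<tau> *\<^sub>R d) \<bullet> d - grad x \<bullet> d - \<beta> * \<tau> * (norm d)\<^sup>2"]) auto
  qed simp
  then show ?thesis unfolding \<psi>_def d_def by simp
qed

lemma beta_nonneg:
  fixes grad :: "'a::euclidean_space \<Rightarrow> 'a"
  assumes smooth: "\<And>x y. norm (grad x - grad y) \<le> \<beta> * norm (x - y)"
  shows "\<beta> \<ge> 0"
proof -
  obtain b :: 'a where b: "b \<in> Basis" using nonempty_Basis by blast
  then have "norm b = 1" by simp
  have "0 \<le> norm (grad b - grad 0)" by simp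
  also have "\<dots> \<le> \<beta> * norm (b - 0)" by (rule smooth)
  finally show ?thesis using \<open>norm b = 1\<close> by simp
qed

lemma grad_sq_bound:
  fixes f :: "'a::euclidean_space \<Rightarrow> real" and grad :: "'a \<Rightarrow> 'a"
  assumes grad: "\<And>x. (f has_derivative (\<lambda>h. grad x \<bullet> h)) (at x)"
    and smooth: "\<And>x y. norm (grad x - grad y) \<le> \<beta> * norm (x - y)"
    and lb: "\<And>x. fstar \<le> f x"
  shows "(norm (grad x))\<^sup>2 \<le> 2 * \<beta> * (f x - fstar)"
proof (cases "\<beta> = 0")
  case True
  show ?thesis
  proof (rule ccontr)
    assume "\<not> ?thesis"
    then have pos: "(norm (grad x))\<^sup>2 > 0" using True by simp
    define \<tau> where "\<tau> = (f x - fstar + 1) / (norm (grad x))\<^sup>2"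
    have "\<tau> > 0" unfolding \<tau>_def using pos lb[of x] by simp
    have "f (x - \<tau> *\<^sub>R grad x) \<le> f x + grad x \<bullet> ((x - \<tau> *\<^sub>R grad x) - x)"
      using descent_lemma[OF grad smooth, of "x - \<tau> *\<^sub>R grad x" x] True by simp
    also have "\<dots> = f x - \<tau> * (norm (grad x))\<^sup>2" by (simp add: power2_norm_eq_inner)
    also have "\<dots> = fstar - 1" unfolding \<tau>_def using pos by simp
    finally show False using lb[of "x - \<tau> *\<^sub>R grad x"] by simp
  qed
next
  case False
  then have bp: "\<beta> > 0" using beta_nonneg[OF smooth] by simp
  have "fstar \<le> f (x - (1/\<beta>) *\<^sub>R grad x)" by (rule lb)
  also have "\<dots> \<le> f x + grad x \<bullet> ((x - (1/\<beta>) *\<^sub>R grad x) - x) + \<beta> / 2 * (norm ((x - (1/\<beta>) *\<^sub>R grad x) - x))\<^sup>2"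
    by (rule descent_lemma[OF grad smooth])
  also have "\<dots> = f x - (norm (grad x))\<^sup>2 / (2 * \<beta>)"
  proof -
    have "grad x \<bullet> ((x - (1/\<beta>) *\<^sub>R grad x) - x) = - (1/\<beta>) * (norm (grad x))\<^sup>2"
      by (simp add: power2_norm_eq_inner)
    moreover have "(norm ((x - (1/\<beta>) *\<^sub>R grad x) - x))\<^sup>2 = (1/\<beta>)\<^sup>2 * (norm (grad x))\<^sup>2"
      using bp by (simp add: power_mult_distrib power_divide)
    ultimately show ?thesis using bp by (simp add: power2_eq_square field_simps)
  qed
  finally show ?thesis using bp by (simp add: field_simps)
qed




locale ada =
  fixes M :: "'b measure"
    and f :: "'a::euclidean_space \<Rightarrow> real" and grad :: "'a \<Rightarrow> 'a"
    and g :: "nat \<Rightarrow> 'b \<Rightarrow> 'a"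
    and w1 :: 'a
    and \<beta> fstar \<eta> \<gamma> \<sigma>0 \<sigma>1 \<delta> :: real and T :: nat
  assumes prob: "prob_space M"
    and grad: "\<And>x. (f has_derivative (\<lambda>h. grad x \<bullet> h)) (at x)"
    and smooth: "\<And>x y. norm (grad x - grad y) \<le> \<beta> * norm (x - y)"
    and fstar_le: "\<And>x. fstar \<le> f x"
    and eta_pos: "\<eta> > 0" and gamma_pos: "\<gamma> > 0" and s0_nn: "\<sigma>0 \<ge> 0" and s1_nn: "\<sigma>1 \<ge> 0"
    and delta_pos: "0 < \<delta>" and delta_lt: "\<delta> < 1"
    and g_meas: "\<And>t. t \<in> {1..T} \<Longrightarrow> g t \<in> borel_measurable M"
    and g_int: "\<And>t. t \<in> {1..T} \<Longrightarrow> integrable M (g t)"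
    and unbiased: "\<And>t u. t \<in> {1..T} \<Longrightarrow>
        AE \<omega> in M. real_cond_exp M (hist M g t) (\<lambda>\<omega>. g t \<omega> \<bullet> u) \<omega>
                     = grad (ada_w \<eta> \<gamma> w1 g t \<omega>) \<bullet> u"
    and noise: "\<And>t. t \<in> {1..T} \<Longrightarrow>
        AE \<omega> in M. (norm (g t \<omega> - grad (ada_w \<eta> \<gamma> w1 g t \<omega>)))\<^sup>2
                     \<le> \<sigma>0\<^sup>2 + \<sigma>1\<^sup>2 * (norm (grad (ada_w \<eta> \<gamma> w1 g t \<omega>)))\<^sup>2"
begin

definition "W t \<omega> = ada_w \<eta> \<gamma> w1 g t \<omega>"
definition "G t \<omega> = (\<Sum>s=1..t. (norm (g s \<omega>))\<^sup>2)"
definition "E t \<omega> = ada_eta \<eta> \<gamma> g t \<omega>"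
definition "Gr t \<omega> = grad (W t \<omega>)"
definition "Xi t \<omega> = g t \<omega> - Gr t \<omega>"
definition "Sig t \<omega> = sqrt (\<sigma>0\<^sup>2 + \<sigma>1\<^sup>2 * (norm (Gr t \<omega>))\<^sup>2)"
definition "Eh t \<omega> = \<eta> / sqrt (\<gamma>\<^sup>2 + G (t - 1) \<omega> + (norm (Gr t \<omega>))\<^sup>2 + (Sig t \<omega>)\<^sup>2)"
definition "Dl t \<omega> = f (W t \<omega>) - fstar"

lemma beta_nn: "\<beta> \<ge> 0" using beta_nonneg[OF smooth] .

lemma G_nn: "G t \<omega> \<ge> 0" unfolding G_def by (auto intro!: sum_nonneg)

lemma G_Suc: "G (Suc t) \<omega> = G t \<omega> + (norm (g (Suc t) \<omega>))\<^sup>2"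
  unfolding G_def by simp

lemma G_0: "G 0 \<omega> = 0" unfolding G_def by simp

lemma G_mono: "t \<le> u \<Longrightarrow> G t \<omega> \<le> G u \<omega>"
  unfolding G_def by (intro sum_mono2) auto

lemma g_le_G: "1 \<le> t \<Longrightarrow> (norm (g t \<omega>))\<^sup>2 \<le> G t \<omega>"
  unfolding G_def by (intro member_le_sum) auto

lemma E_def': "E t \<omega> = \<eta> / sqrt (\<gamma>\<^sup>2 + G t \<omega>)"
  unfolding E_def ada_eta_def G_def ..

lemma den_pos: "\<gamma>\<^sup>2 + G t \<omega> > 0" using gamma_pos G_nn[of t \<omega>] by (simp add: add_pos_nonneg)

lemma E_pos: "E t \<omega> > 0" unfolding E_def' using eta_pos den_pos[of t \<omega>] by simp

lemma E_sq: "(E t \<omega>)\<^sup>2 = \<eta>\<^sup>2 / (\<gamma>\<^sup>2 + G t \<omega>)"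
  unfolding E_def' using den_pos[of t \<omega>] by (simp add: power_divide)

lemma E_0: "E 0 \<omega> = \<eta> / \<gamma>"
  unfolding E_def' G_0 using gamma_pos by simp

lemma W_Suc: "1 \<le> t \<Longrightarrow> W (Suc t) \<omega> = W t \<omega> - E t \<omega> *\<^sub>R g t \<omega>"
  unfolding W_def E_def by (cases t) auto

lemma W_1: "W 1 \<omega> = w1" unfolding W_def by simp

lemma step_le: "1 \<le> t \<Longrightarrow> norm (E t \<omega> *\<^sub>R g t \<omega>) \<le> \<eta>"
proof -
  assume t: "1 \<le> t"
  have "norm (g t \<omega>) \<le> sqrt (\<gamma>\<^sup>2 + G t \<omega>)"
    using g_le_G[OF t, of \<omega>] by (intro real_le_rsqrt) (smt (verit) zero_le_power2)
  then have "norm (g t \<omega>) / sqrt (\<gamma>\<^sup>2 + G t \<omega>) \<le> 1"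
    using den_pos[of t \<omega>] by simp
  then have "\<eta> * (norm (g t \<omega>) / sqrt (\<gamma>\<^sup>2 + G t \<omega>)) \<le> \<eta> * 1"
    using eta_pos by (intro mult_left_mono) auto
  moreover have "norm (E t \<omega> *\<^sub>R g t \<omega>) = \<eta> * (norm (g t \<omega>) / sqrt (\<gamma>\<^sup>2 + G t \<omega>))"
    using eta_pos den_pos[of t \<omega>] unfolding E_def' by simp
  ultimately show ?thesis by simp
qed

lemma W_dist: "1 \<le> t \<Longrightarrow> norm (W t \<omega> - w1) \<le> \<eta> * (real t - 1)"
proof (induction t rule: dec_induct)
  case base then show ?case by (simp add: W_def)
next
  case (step t)
  have "norm (W (Suc t) \<omega> - w1) \<le> norm (W t \<omega> - w1) + norm (E t \<omega> *\<^sub>R g t \<omega>)"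
  proof -
    have "W (Suc t) \<omega> - w1 = (W t \<omega> - w1) - E t \<omega> *\<^sub>R g t \<omega>" using W_Suc[OF step(1)] by simp
    then show ?thesis using norm_triangle_ineq4 by metis
  qed
  also have "\<dots> \<le> \<eta> * (real t - 1) + \<eta>" using add_mono[OF step(3) step_le[OF step(1), of \<omega>]] by simp
  finally show ?case by (simp add: algebra_simps)
qed

lemma Gr_bound: "1 \<le> t \<Longrightarrow> norm (Gr t \<omega>) \<le> norm (grad w1) + \<beta> * \<eta> * (real t - 1)"
proof -
  assume t: "1 \<le> t"
  have "norm (Gr t \<omega>) \<le> norm (grad w1) + norm (Gr t \<omega> - grad w1)"
    using norm_triangle_ineq2[of "Gr t \<omega>" "grad w1"] by simp
  also have "norm (Gr t \<omega> - grad w1) \<le> \<beta> * norm (W t \<omega> - w1)"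
    unfolding Gr_def by (rule smooth)
  also have "\<dots> \<le> \<beta> * (\<eta> * (real t - 1))"
    using W_dist[OF t] beta_nn by (intro mult_left_mono) auto
  finally show ?thesis by (simp add: mult_ac)
qed

lemma gradsq: "(norm (grad x))\<^sup>2 \<le> 2 * \<beta> * (f x - fstar)"
  by (rule grad_sq_bound[OF grad smooth fstar_le])

lemma Sig_nn: "Sig t \<omega> \<ge> 0" unfolding Sig_def by simp

lemma Sig_sq: "(Sig t \<omega>)\<^sup>2 = \<sigma>0\<^sup>2 + \<sigma>1\<^sup>2 * (norm (Gr t \<omega>))\<^sup>2"
  unfolding Sig_def by (simp add: add_nonneg_nonneg)

end



lemma sqrt_shift:
  fixes c u v :: real
  assumes "c \<ge> 0" "u \<ge> 0" "v \<ge> 0"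
  shows "\<bar>sqrt (c + u) - sqrt (c + v)\<bar> \<le> \<bar>sqrt u - sqrt v\<bar>"
proof -
  have key: "sqrt (c + v) - sqrt (c + u) \<le> sqrt v - sqrt u" if "u \<le> v" "u \<ge> 0" for u v
  proof -
    have "(sqrt (c + v) - sqrt (c + u)) * (sqrt (c + v) + sqrt (c + u)) = v - u"
      using assms that by (simp add: algebra_simps)
    have Q: "(sqrt v - sqrt u) * (sqrt v + sqrt u) = v - u"
      using assms that by (simp add: algebra_simps)
    show ?thesis
    proof (cases "sqrt v + sqrt u = 0")
      case True
      then have "u = 0" "v = 0" using that by (smt (verit) real_sqrt_ge_zero real_sqrt_eq_zero_cancel_iff)+
      then show ?thesis by simp
    next
      case False
      then have Qp: "sqrt v + sqrt u > 0" by (smt (verit) real_sqrt_ge_zero that(2) \<open>u \<le> v\<close>)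
      have PQ: "sqrt v + sqrt u \<le> sqrt (c + v) + sqrt (c + u)"
        using assms that by (intro add_mono) auto
      have "sqrt (c + v) - sqrt (c + u) = (v - u) / (sqrt (c + v) + sqrt (c + u))"
        using \<open>(sqrt (c + v) - sqrt (c + u)) * _ = _\<close> Qp PQ by (simp add: eq_divide_eq)
      also have "\<dots> \<le> (v - u) / (sqrt v + sqrt u)"
        using Qp PQ that by (intro divide_left_mono) auto
      also have "\<dots> = sqrt v - sqrt u" using Q Qp by (simp add: divide_eq_eq)
      finally show ?thesis .
    qed
  qed
  show ?thesis
  proof (cases "u \<le> v")
    case True
    then show ?thesis using key[of u v] assms by (auto simp: abs_if)
  next
    case False
    then show ?thesis using key[of v u] assms by (auto simp: abs_if)
  qed
qed

lemma log_sum_bound: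
  fixes a :: "nat \<Rightarrow> real" and c :: real
  assumes "c > 0" "\<And>s. a s \<ge> 0"
  shows "(\<Sum>s=1..t. a s / (c + (\<Sum>r=1..s. a r))) \<le> ln ((c + (\<Sum>r=1..t. a r)) / c)"
proof (induction t)
  case 0 then show ?case using assms by simp
next
  case (Suc t)
  define A where "A = (\<Sum>r=1..t. a r)"
  have A0: "A \<ge> 0" unfolding A_def using assms by (auto intro!: sum_nonneg)
  have AS: "(\<Sum>r=1..Suc t. a r) = A + a (Suc t)" unfolding A_def by simp
  have p1: "c + A > 0" using A0 assms by simp
  have p2: "c + A + a (Suc t) > 0" using A0 assms(1) assms(2)[of "Suc t"] by simp
  have "ln ((c + A) / (c + A + a (Suc t))) \<le> (c + A) / (c + A + a (Suc t)) - 1"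
    using p1 p2 by (intro ln_le_minus_one) simp
  also have "\<dots> = - a (Suc t) / (c + A + a (Suc t))" using p2 by (simp add: field_simps)
  finally have "a (Suc t) / (c + A + a (Suc t)) \<le> ln (c + A + a (Suc t)) - ln (c + A)"
    using p1 p2 by (simp add: ln_div)
  moreover have "ln ((c + A) / c) = ln (c + A) - ln c" using p1 assms by (simp add: ln_div)
  moreover have "ln ((c + A + a (Suc t)) / c) = ln (c + A + a (Suc t)) - ln c" using p2 assms by (simp add: ln_div)
  moreover have "(\<Sum>s=1..Suc t. a s / (c + (\<Sum>r=1..s. a r))) = (\<Sum>s=1..t. a s / (c + (\<Sum>r=1..s. a r))) + a (Suc t) / (c + A + a (Suc t))"
    by (simp add: AS add.assoc A_def)
  moreover have "ln ((c + (\<Sum>r=1..Suc t. a r)) / c) = ln ((c + A + a (Suc t)) / c)" by (simp add: AS add.assoc A_def)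
  moreover note Suc.IH[folded A_def]
  ultimately show ?case by linarith
qed

lemma F_alg:
  fixes \<Delta>1 L C1 \<eta> \<beta> \<sigma>0 \<sigma>1 FF sb :: real
  assumes "\<Delta>1 \<ge> 0" "L \<ge> 0" "C1 \<ge> 0" "\<eta> > 0" "\<beta> \<ge> 0" "\<sigma>0 \<ge> 0" "\<sigma>1 \<ge> 0"
    and FF: "FF = 2 * \<Delta>1 + (3 * L + 4 * C1) * \<eta> * \<sigma>0
                 + (9 * L\<^sup>2 + 16 * C1\<^sup>2) * \<eta>\<^sup>2 * \<beta> * \<sigma>1\<^sup>2 + \<eta>\<^sup>2 * \<beta> * C1"
    and sb: "sb = sqrt (\<sigma>0\<^sup>2 + 2 * \<beta> * \<sigma>1\<^sup>2 * FF)"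
  shows "\<Delta>1 + \<eta> * sb * (L + 2 * C1) + \<beta> * \<eta>\<^sup>2 * C1 / 2 \<le> FF"
proof -
  have FF0: "FF \<ge> 0" unfolding FF using assms by (intro add_nonneg_nonneg mult_nonneg_nonneg) auto
  have "sb \<le> sqrt (\<sigma>0\<^sup>2) + sqrt (2 * \<beta> * \<sigma>1\<^sup>2 * FF)"
    unfolding sb using FF0 assms by (intro sqrt_add_le_add_sqrt) auto
  also have "\<dots> = \<sigma>0 + \<sigma>1 * sqrt (2 * \<beta>) * sqrt FF"
    using assms by (simp add: real_sqrt_mult)
  finally have sb_le: "sb \<le> \<sigma>0 + \<sigma>1 * sqrt (2 * \<beta>) * sqrt FF" .
  define B where "B = \<eta> * (L + 2 * C1) * \<sigma>1 * sqrt (2 * \<beta>)"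
  have "B * sqrt FF \<le> FF / 2 + B\<^sup>2 / 2"
  proof -
    have "0 \<le> (B - sqrt FF)\<^sup>2" by simp
    then show ?thesis using FF0 by (simp add: power2_eq_square algebra_simps)
  qed
  have B2: "B\<^sup>2 = \<eta>\<^sup>2 * (L + 2 * C1)\<^sup>2 * \<sigma>1\<^sup>2 * (2 * \<beta>)"
    unfolding B_def using assms by (simp add: power_mult_distrib)
  have "\<eta> * sb * (L + 2 * C1) \<le> \<eta> * (\<sigma>0 + \<sigma>1 * sqrt (2 * \<beta>) * sqrt FF) * (L + 2 * C1)"
    using sb_le assms by (intro mult_right_mono mult_left_mono) auto
  also have "\<dots> = \<eta> * \<sigma>0 * (L + 2 * C1) + B * sqrt FF" unfolding B_def by (simp add: algebra_simps)
  finally have 1: "\<eta> * sb * (L + 2 * C1) \<le> \<eta> * \<sigma>0 * (L + 2 * C1) + FF / 2 + B\<^sup>2 / 2"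
    using \<open>B * sqrt FF \<le> _\<close> by simp
  have 2: "2 * (L + 2 * C1)\<^sup>2 \<le> 9 * L\<^sup>2 + 16 * C1\<^sup>2"
  proof -
    have e: "2 * (L + 2 * C1)\<^sup>2 = 2 * (L * L) + 8 * (L * C1) + 8 * (C1 * C1)" by (simp add: power2_eq_square algebra_simps)
    have e2: "9 * L\<^sup>2 + 16 * C1\<^sup>2 = 9 * (L * L) + 16 * (C1 * C1)" by (simp add: power2_eq_square)
    have "0 \<le> (2 * L - 2 * C1)\<^sup>2" by simp
    then have "8 * (L * C1) \<le> 4 * (L * L) + 4 * (C1 * C1)" by (simp add: power2_eq_square algebra_simps)
    moreover have "0 \<le> L * L" "0 \<le> C1 * C1" by simp_all
    ultimately show ?thesis unfolding e e2 by linarith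
  qed
  have 3: "\<eta>\<^sup>2 * \<sigma>1\<^sup>2 * \<beta> * (2 * (L + 2 * C1)\<^sup>2) \<le> \<eta>\<^sup>2 * \<sigma>1\<^sup>2 * \<beta> * (9 * L\<^sup>2 + 16 * C1\<^sup>2)"
    using 2 assms by (intro mult_left_mono) auto
  have 4: "2 * L * \<eta> * \<sigma>0 \<le> 3 * L * \<eta> * \<sigma>0" using assms by (intro mult_right_mono) auto
  have 5: "2 * \<Delta>1 + 2 * (\<eta> * \<sigma>0 * (L + 2 * C1)) + B\<^sup>2 + \<beta> * \<eta>\<^sup>2 * C1 \<le> FF"
  proof -
    have "B\<^sup>2 = \<eta>\<^sup>2 * \<sigma>1\<^sup>2 * \<beta> * (2 * (L + 2 * C1)\<^sup>2)" unfolding B2 by (simp add: algebra_simps)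
    then have "B\<^sup>2 \<le> (9 * L\<^sup>2 + 16 * C1\<^sup>2) * \<eta>\<^sup>2 * \<beta> * \<sigma>1\<^sup>2" using 3 by (simp add: algebra_simps)
    moreover have "2 * (\<eta> * \<sigma>0 * (L + 2 * C1)) \<le> (3 * L + 4 * C1) * \<eta> * \<sigma>0" using 4 by (simp add: algebra_simps)
    ultimately show ?thesis unfolding FF by (simp add: algebra_simps)
  qed
  show ?thesis using 1 5 by linarith
qed

context ada begin

definition "\<Delta>1 = f w1 - fstar"
definition "C1 = log 2 (1 + (2 * \<sigma>0\<^sup>2 * T + 8 * (1 + \<sigma>1\<^sup>2) * (\<eta>\<^sup>2 * \<beta>\<^sup>2 * T ^ 3 + \<beta> * \<Delta>1 * T)) / \<gamma>\<^sup>2)"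
definition "L = log 2 (T / \<delta>)"
definition "FF = 2 * \<Delta>1 + (3 * L + 4 * C1) * \<eta> * \<sigma>0
                 + (9 * L\<^sup>2 + 16 * C1\<^sup>2) * \<eta>\<^sup>2 * \<beta> * \<sigma>1\<^sup>2 + \<eta>\<^sup>2 * \<beta> * C1"
definition "sq = \<sigma>0\<^sup>2 + 2 * \<beta> * \<sigma>1\<^sup>2 * FF"
definition "sb = sqrt sq"

definition "noiseOK \<omega> \<longleftrightarrow> (\<forall>s\<in>{1..T}. norm (Xi s \<omega>) \<le> Sig s \<omega>)"

lemma Delta1_nn: "\<Delta>1 \<ge> 0" unfolding \<Delta>1_def using fstar_le[of w1] by simp

lemma Gbnd_nn: "(2 * \<sigma>0\<^sup>2 * T + 8 * (1 + \<sigma>1\<^sup>2) * (\<eta>\<^sup>2 * \<beta>\<^sup>2 * T ^ 3 + \<beta> * \<Delta>1 * T)) \<ge> 0"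
  using Delta1_nn beta_nn by (intro add_nonneg_nonneg mult_nonneg_nonneg) auto

lemma C1_nn: "C1 \<ge> 0"
proof -
  have "(2 * \<sigma>0\<^sup>2 * T + 8 * (1 + \<sigma>1\<^sup>2) * (\<eta>\<^sup>2 * \<beta>\<^sup>2 * T ^ 3 + \<beta> * \<Delta>1 * T)) / \<gamma>\<^sup>2 \<ge> 0"
    using Gbnd_nn by simp
  then show ?thesis unfolding C1_def by (subst zero_le_log_cancel_iff) auto
qed

lemma L_nn: "T \<ge> 1 \<Longrightarrow> L \<ge> 0"
  unfolding L_def using delta_pos delta_lt by (simp add: field_simps)

lemma FF_ge: "T \<ge> 1 \<Longrightarrow> FF \<ge> 2 * \<Delta>1"
proof -
  assume T: "T \<ge> 1"
  have "0 \<le> (3 * L + 4 * C1) * \<eta> * \<sigma>0 + (9 * L\<^sup>2 + 16 * C1\<^sup>2) * \<eta>\<^sup>2 * \<beta> * \<sigma>1\<^sup>2 + \<eta>\<^sup>2 * \<beta> * C1"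
    using L_nn[OF T] C1_nn eta_pos beta_nn s0_nn s1_nn
    by (intro add_nonneg_nonneg mult_nonneg_nonneg) auto
  then show ?thesis unfolding FF_def by simp
qed

lemma FF_nn: "T \<ge> 1 \<Longrightarrow> FF \<ge> 0"
  using FF_ge Delta1_nn by force

lemma sq_nn: "T \<ge> 1 \<Longrightarrow> sq \<ge> 0"
  unfolding sq_def using FF_nn beta_nn by (intro add_nonneg_nonneg mult_nonneg_nonneg) auto

lemma F_main: "T \<ge> 1 \<Longrightarrow> \<Delta>1 + \<eta> * sb * (L + 2 * C1) + \<beta> * \<eta>\<^sup>2 * C1 / 2 \<le> FF"
  by (rule F_alg[OF Delta1_nn L_nn C1_nn eta_pos beta_nn s0_nn s1_nn FF_def]) (simp_all add: sb_def sq_def)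

end



lemma sq_sum_le: fixes x y :: real shows "(x + y)\<^sup>2 \<le> 2 * x\<^sup>2 + 2 * y\<^sup>2"
proof -
  have "0 \<le> (x - y)\<^sup>2" by simp
  then show ?thesis by (simp add: power2_eq_square algebra_simps)
qed

lemma norm_add_sq_le: "(norm (a + b))\<^sup>2 \<le> 2 * (norm a)\<^sup>2 + 2 * (norm (b::'a::real_normed_vector))\<^sup>2"
proof -
  have "(norm (a + b))\<^sup>2 \<le> (norm a + norm b)\<^sup>2"
    by (intro power_mono norm_triangle_ineq) auto
  also have "\<dots> \<le> 2 * (norm a)\<^sup>2 + 2 * (norm b)\<^sup>2" by (rule sq_sum_le)
  finally show ?thesis .
qed

lemma ln_le_log2: "y \<ge> 1 \<Longrightarrow> ln y \<le> log 2 y"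
proof -
  assume y: "y \<ge> 1"
  have "ln y \<ge> 0" using y by simp
  moreover have "0 < ln (2::real)" "ln (2::real) < 1" using ln_2_less_1 by auto
  ultimately have "ln y * ln 2 \<le> ln y" by (simp add: mult_left_le)
  then show ?thesis unfolding log_def using \<open>0 < ln 2\<close> by (simp add: field_simps)
qed

context ada begin

lemma Sig_le: "1 \<le> s \<Longrightarrow> Dl s \<omega> \<le> FF \<Longrightarrow> Sig s \<omega> \<le> sb"
proof -
  assume "1 \<le> s" "Dl s \<omega> \<le> FF"
  have "(norm (Gr s \<omega>))\<^sup>2 \<le> 2 * \<beta> * Dl s \<omega>" unfolding Gr_def Dl_def by (rule gradsq)
  also have "\<dots> \<le> 2 * \<beta> * FF" using \<open>Dl s \<omega> \<le> FF\<close> beta_nn by (intro mult_left_mono) auto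
  finally have "\<sigma>1\<^sup>2 * (norm (Gr s \<omega>))\<^sup>2 \<le> \<sigma>1\<^sup>2 * (2 * \<beta> * FF)" by (intro mult_left_mono) auto
  then have "\<sigma>0\<^sup>2 + \<sigma>1\<^sup>2 * (norm (Gr s \<omega>))\<^sup>2 \<le> sq" unfolding sq_def by (simp add: algebra_simps)
  then show ?thesis unfolding Sig_def sb_def by (rule real_sqrt_le_mono)
qed

lemma g_sq_bound:
  assumes s: "1 \<le> s" "s \<le> T" and nz: "norm (Xi s \<omega>) \<le> Sig s \<omega>"
  shows "(norm (g s \<omega>))\<^sup>2 \<le> 2 * \<sigma>0\<^sup>2 + 2 * (1 + \<sigma>1\<^sup>2) * (4 * \<beta> * \<Delta>1 + 2 * \<beta>\<^sup>2 * \<eta>\<^sup>2 * (real T)\<^sup>2)"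
proof -
  have "g s \<omega> = Gr s \<omega> + Xi s \<omega>" unfolding Xi_def by simp
  then have "(norm (g s \<omega>))\<^sup>2 \<le> 2 * (norm (Gr s \<omega>))\<^sup>2 + 2 * (norm (Xi s \<omega>))\<^sup>2"
    using norm_add_sq_le by metis
  also have "(norm (Xi s \<omega>))\<^sup>2 \<le> (Sig s \<omega>)\<^sup>2" using nz by (intro power_mono) auto
  finally have 1: "(norm (g s \<omega>))\<^sup>2 \<le> 2 * \<sigma>0\<^sup>2 + 2 * (1 + \<sigma>1\<^sup>2) * (norm (Gr s \<omega>))\<^sup>2"
    unfolding Sig_sq by (simp add: algebra_simps)
  have "norm (Gr s \<omega>) \<le> norm (grad w1) + \<beta> * \<eta> * (real s - 1)" by (rule Gr_bound[OF s(1)])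
  also have "\<dots> \<le> norm (grad w1) + \<beta> * \<eta> * real T"
    using s beta_nn eta_pos by (intro add_left_mono mult_left_mono) auto
  finally have "(norm (Gr s \<omega>))\<^sup>2 \<le> (norm (grad w1) + \<beta> * \<eta> * real T)\<^sup>2"
    by (intro power_mono) auto
  also have "\<dots> \<le> 2 * (norm (grad w1))\<^sup>2 + 2 * (\<beta> * \<eta> * real T)\<^sup>2" by (rule sq_sum_le)
  also have "(norm (grad w1))\<^sup>2 \<le> 2 * \<beta> * \<Delta>1" unfolding \<Delta>1_def by (rule gradsq)
  finally have "(norm (Gr s \<omega>))\<^sup>2 \<le> 4 * \<beta> * \<Delta>1 + 2 * \<beta>\<^sup>2 * \<eta>\<^sup>2 * (real T)\<^sup>2"
    by (simp add: power_mult_distrib)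
  then have "2 * (1 + \<sigma>1\<^sup>2) * (norm (Gr s \<omega>))\<^sup>2 \<le> 2 * (1 + \<sigma>1\<^sup>2) * (4 * \<beta> * \<Delta>1 + 2 * \<beta>\<^sup>2 * \<eta>\<^sup>2 * (real T)\<^sup>2)"
    by (intro mult_left_mono) auto
  with 1 show ?thesis by simp
qed

lemma G_bound:
  assumes nOK: "noiseOK \<omega>" and t: "t \<le> T"
  shows "G t \<omega> \<le> 2 * \<sigma>0\<^sup>2 * T + 8 * (1 + \<sigma>1\<^sup>2) * (\<eta>\<^sup>2 * \<beta>\<^sup>2 * T ^ 3 + \<beta> * \<Delta>1 * T)"
proof -
  define B where "B = 2 * \<sigma>0\<^sup>2 + 2 * (1 + \<sigma>1\<^sup>2) * (4 * \<beta> * \<Delta>1 + 2 * \<beta>\<^sup>2 * \<eta>\<^sup>2 * (real T)\<^sup>2)"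
  have "G t \<omega> \<le> G T \<omega>" using t by (rule G_mono)
  also have "G T \<omega> \<le> (\<Sum>s=1..T. B)" unfolding G_def B_def
    using nOK unfolding noiseOK_def by (intro sum_mono g_sq_bound) auto
  also have "\<dots> = T * B" by simp
  also have "\<dots> \<le> 2 * \<sigma>0\<^sup>2 * T + 8 * (1 + \<sigma>1\<^sup>2) * (\<eta>\<^sup>2 * \<beta>\<^sup>2 * T ^ 3 + \<beta> * \<Delta>1 * T)"
  proof -
    have "T * B = 2 * \<sigma>0\<^sup>2 * T + (1 + \<sigma>1\<^sup>2) * (8 * \<beta> * \<Delta>1 * T + 4 * (\<eta>\<^sup>2 * \<beta>\<^sup>2 * T ^ 3))"
      unfolding B_def by (simp add: algebra_simps power2_eq_square power3_eq_cube)
    moreover have "0 \<le> \<eta>\<^sup>2 * \<beta>\<^sup>2 * T ^ 3" by simp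
    ultimately show ?thesis by (simp add: algebra_simps)
  qed
  finally show ?thesis .
qed

lemma sumE_bound:
  assumes nOK: "noiseOK \<omega>" and t: "t \<le> T"
  shows "(\<Sum>s=1..t. (E s \<omega>)\<^sup>2 * (norm (g s \<omega>))\<^sup>2) \<le> \<eta>\<^sup>2 * C1"
proof -
  have "(\<Sum>s=1..t. (E s \<omega>)\<^sup>2 * (norm (g s \<omega>))\<^sup>2) = \<eta>\<^sup>2 * (\<Sum>s=1..t. (norm (g s \<omega>))\<^sup>2 / (\<gamma>\<^sup>2 + (\<Sum>r=1..s. (norm (g r \<omega>))\<^sup>2)))"
    unfolding E_sq G_def by (simp add: sum_distrib_left)
  also have "\<dots> \<le> \<eta>\<^sup>2 * ln ((\<gamma>\<^sup>2 + (\<Sum>r=1..t. (norm (g r \<omega>))\<^sup>2)) / \<gamma>\<^sup>2)"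
    using gamma_pos by (intro mult_left_mono log_sum_bound) auto
  also have "ln ((\<gamma>\<^sup>2 + (\<Sum>r=1..t. (norm (g r \<omega>))\<^sup>2)) / \<gamma>\<^sup>2) = ln (1 + G t \<omega> / \<gamma>\<^sup>2)"
    unfolding G_def using gamma_pos by (simp add: add_divide_distrib)
  also have "\<dots> \<le> log 2 (1 + G t \<omega> / \<gamma>\<^sup>2)"
    using G_nn[of t \<omega>] by (intro ln_le_log2) simp
  also have "\<dots> \<le> C1" unfolding C1_def using G_bound[OF nOK t] G_nn[of t \<omega>] gamma_pos
    by (subst log_le_cancel_iff) (auto intro!: add_pos_nonneg divide_right_mono)
  finally show ?thesis by (simp add: mult_left_mono)
qed

end



context ada begin

lemma Eh_pos: "Eh s \<omega> > 0"
proof -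
  have "\<gamma>\<^sup>2 + G (s - 1) \<omega> + (norm (Gr s \<omega>))\<^sup>2 + (Sig s \<omega>)\<^sup>2 > 0"
    using den_pos[of "s - 1" \<omega>] by (simp add: add_pos_nonneg)
  then show ?thesis unfolding Eh_def using eta_pos by simp
qed

lemma Eh_Sig: "Eh s \<omega> * Sig s \<omega> \<le> \<eta>"
proof -
  define b where "b = \<gamma>\<^sup>2 + G (s - 1) \<omega> + (norm (Gr s \<omega>))\<^sup>2 + (Sig s \<omega>)\<^sup>2"
  have bp: "b > 0" unfolding b_def using den_pos[of "s - 1" \<omega>] by (simp add: add_pos_nonneg)
  have "Sig s \<omega> \<le> sqrt b" unfolding b_def using den_pos[of "s - 1" \<omega>] Sig_nn[of s \<omega>]
    by (intro real_le_rsqrt) simp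
  then have "Sig s \<omega> / sqrt b \<le> 1" using bp by simp
  then have "\<eta> * (Sig s \<omega> / sqrt b) \<le> \<eta> * 1" using eta_pos by (intro mult_left_mono) auto
  then show ?thesis unfolding Eh_def b_def[symmetric] by simp
qed

lemma step_descent:
  assumes s: "1 \<le> s" and nz: "norm (Xi s \<omega>) \<le> Sig s \<omega>"
  shows "Dl (Suc s) \<omega> \<le> Dl s \<omega> - Eh s \<omega> * (norm (Gr s \<omega>))\<^sup>2 / 2 - Eh s \<omega> * (Gr s \<omega> \<bullet> Xi s \<omega>)
           + (2 * Sig s \<omega> / \<eta> + \<beta> / 2) * ((E s \<omega>)\<^sup>2 * (norm (g s \<omega>))\<^sup>2)"
proof -
  define e where "e = E s \<omega>"
  define h where "h = Eh s \<omega>"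
  define gg where "gg = g s \<omega>"
  define N where "N = norm (Gr s \<omega>)"
  define Gn where "Gn = norm gg"
  define S where "S = Sig s \<omega>"
  define c where "c = \<gamma>\<^sup>2 + G (s - 1) \<omega>"
  define a where "a = c + Gn\<^sup>2"
  define b where "b = c + (N\<^sup>2 + S\<^sup>2)"
  have cp: "c > 0" unfolding c_def by (rule den_pos)
  have S0: "S \<ge> 0" unfolding S_def by (rule Sig_nn)
  have ap: "a > 0" unfolding a_def using cp by (simp add: add_pos_nonneg)
  have bp: "b > 0" unfolding b_def using cp by (simp add: add_pos_nonneg)
  have Gs: "G s \<omega> = G (s - 1) \<omega> + Gn\<^sup>2"
    using G_Suc[of "s - 1" \<omega>] s unfolding Gn_def gg_def by simp
  have e_eq: "e = \<eta> / sqrt a" unfolding e_def E_def' a_def c_def Gs by (simp add: add.assoc)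
  have h_eq: "h = \<eta> / sqrt b" unfolding h_def Eh_def b_def c_def N_def S_def by (simp add: add.assoc)
  have h0: "h > 0" unfolding h_def by (rule Eh_pos)
  have e0: "e > 0" unfolding e_def by (rule E_pos)
  have hS: "h * S \<le> \<eta>" unfolding h_def S_def by (rule Eh_Sig)
  have gsplit: "gg = Gr s \<omega> + Xi s \<omega>" unfolding gg_def Xi_def by simp
  have Wn: "W (Suc s) \<omega> = W s \<omega> - e *\<^sub>R gg" unfolding e_def gg_def by (rule W_Suc[OF s])
  have "f (W (Suc s) \<omega>) \<le> f (W s \<omega>) + Gr s \<omega> \<bullet> (W (Suc s) \<omega> - W s \<omega>) + \<beta> / 2 * (norm (W (Suc s) \<omega> - W s \<omega>))\<^sup>2"
    unfolding Gr_def by (rule descent_lemma[OF grad smooth])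
  also have "\<dots> = f (W s \<omega>) - e * (Gr s \<omega> \<bullet> gg) + \<beta> / 2 * (e\<^sup>2 * Gn\<^sup>2)"
    unfolding Wn Gn_def using e0 by (simp add: power_mult_distrib)
  finally have desc: "Dl (Suc s) \<omega> \<le> Dl s \<omega> - e * (Gr s \<omega> \<bullet> gg) + \<beta> / 2 * (e\<^sup>2 * Gn\<^sup>2)"
    unfolding Dl_def by simp
  have inner_split: "Gr s \<omega> \<bullet> gg = N\<^sup>2 + Gr s \<omega> \<bullet> Xi s \<omega>"
    unfolding gsplit N_def by (simp add: inner_add_right power2_norm_eq_inner)
  have Gn_le: "Gn \<le> N + S"
    unfolding Gn_def gsplit N_def S_def using nz norm_triangle_ineq[of "Gr s \<omega>" "Xi s \<omega>"] by simp
  have Gn_ge: "N - S \<le> Gn"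
  proof -
    have "N = norm (gg - Xi s \<omega>)" unfolding N_def gsplit by simp
    also have "\<dots> \<le> Gn + norm (Xi s \<omega>)" unfolding Gn_def by (rule norm_triangle_ineq4)
    finally show ?thesis using nz unfolding S_def by simp
  qed
  define r where "r = sqrt (N\<^sup>2 + S\<^sup>2)"
  have r_ge: "N \<le> r" unfolding r_def N_def by (rule real_le_rsqrt) simp
  have r_le: "r \<le> N + S" unfolding r_def
  proof (rule real_le_lsqrt)
    show "0 \<le> N + S" using S0 unfolding N_def by simp
    show "N\<^sup>2 + S\<^sup>2 \<le> (N + S)\<^sup>2" using S0 unfolding N_def by (simp add: power2_eq_square algebra_simps)
  qed
  have Gr_diff: "\<bar>Gn - r\<bar> \<le> 2 * S" using Gn_le Gn_ge r_ge r_le S0 by (simp add: abs_le_iff)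
  have Gn0: "Gn \<ge> 0" unfolding Gn_def by simp
  have "\<bar>sqrt a - sqrt b\<bar> \<le> \<bar>sqrt (Gn\<^sup>2) - sqrt (N\<^sup>2 + S\<^sup>2)\<bar>"
    unfolding a_def b_def using cp by (intro sqrt_shift) auto
  also have "\<dots> = \<bar>Gn - r\<bar>" using Gn0 unfolding r_def by simp
  finally have sab: "\<bar>sqrt a - sqrt b\<bar> \<le> 2 * S" using Gr_diff by simp
  have he: "h * e / \<eta> = \<eta> / (sqrt a * sqrt b)" unfolding h_eq e_eq using eta_pos by (simp add: field_simps)
  have "h - e = \<eta> / (sqrt a * sqrt b) * (sqrt a - sqrt b)"
    unfolding h_eq e_eq using ap bp by (simp add: field_simps)
  then have "\<bar>h - e\<bar> = \<eta> / (sqrt a * sqrt b) * \<bar>sqrt a - sqrt b\<bar>"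
    using eta_pos ap bp by (simp add: abs_mult)
  also have "\<dots> \<le> \<eta> / (sqrt a * sqrt b) * (2 * S)"
    using sab eta_pos ap bp by (intro mult_left_mono) auto
  also have "\<eta> / (sqrt a * sqrt b) * (2 * S) = 2 * S * (h * e / \<eta>)" unfolding he by simp
  finally have hediff: "\<bar>h - e\<bar> \<le> 2 * S * h * e / \<eta>" by simp
  have cs: "\<bar>Gr s \<omega> \<bullet> gg\<bar> \<le> N * Gn" unfolding N_def Gn_def by (rule Cauchy_Schwarz_ineq2)
  have "(h - e) * (Gr s \<omega> \<bullet> gg) \<le> \<bar>h - e\<bar> * \<bar>Gr s \<omega> \<bullet> gg\<bar>" by (simp add: abs_mult[symmetric])
  also have "\<dots> \<le> (2 * S * h * e / \<eta>) * (N * Gn)"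
    using hediff cs by (intro mult_mono) auto
  finally have d1: "(h - e) * (Gr s \<omega> \<bullet> gg) \<le> 2 * h * N * (S * e * Gn / \<eta>)" by (simp add: mult_ac)
  define m where "m = S * e * Gn / \<eta>"
  have amgm: "2 * h * N * m \<le> h * N\<^sup>2 / 2 + 2 * h * m\<^sup>2"
  proof -
    have "0 \<le> h * (N - 2 * m)\<^sup>2" using h0 by simp
    then show ?thesis by (simp add: power2_eq_square algebra_simps)
  qed
  have hm: "h * m\<^sup>2 \<le> S * (e\<^sup>2 * Gn\<^sup>2) / \<eta>"
  proof -
    have "h * m\<^sup>2 = (h * S) * (S * (e\<^sup>2 * Gn\<^sup>2) / \<eta>\<^sup>2)" unfolding m_def by (simp add: power2_eq_square field_simps)
    also have "\<dots> \<le> \<eta> * (S * (e\<^sup>2 * Gn\<^sup>2) / \<eta>\<^sup>2)" using hS S0 by (intro mult_right_mono) auto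
    also have "\<dots> = S * (e\<^sup>2 * Gn\<^sup>2) / \<eta>" using eta_pos by (simp add: power2_eq_square)
    finally show ?thesis .
  qed
  have d2: "(h - e) * (Gr s \<omega> \<bullet> gg) \<le> h * N\<^sup>2 / 2 + 2 * S / \<eta> * (e\<^sup>2 * Gn\<^sup>2)"
    using d1[folded m_def] amgm hm by simp
  have "- e * (Gr s \<omega> \<bullet> gg) = - h * (Gr s \<omega> \<bullet> gg) + (h - e) * (Gr s \<omega> \<bullet> gg)" by (simp add: algebra_simps)
  also have "\<dots> \<le> - h * N\<^sup>2 - h * (Gr s \<omega> \<bullet> Xi s \<omega>) + (h * N\<^sup>2 / 2 + 2 * S / \<eta> * (e\<^sup>2 * Gn\<^sup>2))"
    using d2 unfolding inner_split by (simp add: algebra_simps)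
  finally have "- e * (Gr s \<omega> \<bullet> gg) \<le> - h * N\<^sup>2 / 2 - h * (Gr s \<omega> \<bullet> Xi s \<omega>) + 2 * S / \<eta> * (e\<^sup>2 * Gn\<^sup>2)"
    by simp
  with desc show ?thesis unfolding e_def[symmetric] h_def[symmetric] N_def[symmetric] S_def[symmetric] Gn_def gg_def[symmetric]
    by (simp add: algebra_simps)
qed

end



context ada begin

definition "csum v lam t \<omega> = (\<Sum>s=1..t. lam * (v s \<omega> \<bullet> Xi s \<omega>) - (lam * norm (v s \<omega>) * Sig s \<omega>)\<^sup>2 / 2)"
definition "evt v lam \<omega> \<longleftrightarrow> (\<forall>t\<in>{1..T}. csum v lam t \<omega> < ln (T / \<delta>))"
definition "vA s \<omega> = - (Eh s \<omega> *\<^sub>R Gr s \<omega>)"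
definition "vB s \<omega> = - (2 *\<^sub>R Gr s \<omega>)"
definition "lamA = 1 / (\<eta> * sb)"
definition "lamB = 1 / (2 * sq)"

lemma sb_nn: "T \<ge> 1 \<Longrightarrow> sb \<ge> 0" unfolding sb_def using sq_nn by simp

lemma ln_le_L: "T \<ge> 1 \<Longrightarrow> ln (T / \<delta>) \<le> L"
  unfolding L_def using delta_pos delta_lt by (intro ln_le_log2) (simp add: field_simps)

lemma hsumA:
  assumes T1: "T \<ge> 1" and nOK: "noiseOK \<omega>" and ev: "sb > 0 \<Longrightarrow> evt vA lamA \<omega>"
    and t: "1 \<le> t" "t \<le> T" and IH: "\<And>s. s \<in> {1..t} \<Longrightarrow> Dl s \<omega> \<le> FF"
  shows "(\<Sum>s=1..t. - Eh s \<omega> * (Gr s \<omega> \<bullet> Xi s \<omega>)) \<le> (\<Sum>s=1..t. Eh s \<omega> * (norm (Gr s \<omega>))\<^sup>2 / 2) + \<eta> * sb * ln (T / \<delta>)"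
proof (cases "sb > 0")
  case True
  define lam where "lam = lamA"
  have lp: "lam > 0" unfolding lam_def lamA_def using True eta_pos by simp
  have "lam * (\<Sum>s=1..t. - Eh s \<omega> * (Gr s \<omega> \<bullet> Xi s \<omega>)) - lam * (\<Sum>s=1..t. Eh s \<omega> * (norm (Gr s \<omega>))\<^sup>2 / 2)
        = (\<Sum>s=1..t. lam * (- Eh s \<omega> * (Gr s \<omega> \<bullet> Xi s \<omega>)) - lam * (Eh s \<omega> * (norm (Gr s \<omega>))\<^sup>2) / 2)"
    by (simp add: sum_distrib_left sum_subtractf sum_divide_distrib)
  also have "\<dots> \<le> csum vA lam t \<omega>"
    unfolding csum_def
  proof (intro sum_mono)
    fix s assume s: "s \<in> {1..t}"
    have h0: "Eh s \<omega> > 0" by (rule Eh_pos)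
    have Sle: "Sig s \<omega> \<le> sb" using IH[OF s] s by (intro Sig_le) auto
    have "lam * Eh s \<omega> * (Sig s \<omega>)\<^sup>2 = (Eh s \<omega> * Sig s \<omega>) * Sig s \<omega> / (\<eta> * sb)"
      unfolding lam_def lamA_def by (simp add: power2_eq_square)
    also have "\<dots> \<le> \<eta> * sb / (\<eta> * sb)"
      using Eh_Sig[of s \<omega>] Sle Sig_nn[of s \<omega>] h0 eta_pos True
      by (intro divide_right_mono mult_mono) auto
    also have "\<dots> = 1" using eta_pos True by simp
    finally have k: "lam * Eh s \<omega> * (Sig s \<omega>)\<^sup>2 \<le> 1" .
    have "(lam * norm (vA s \<omega>) * Sig s \<omega>)\<^sup>2 = (lam * Eh s \<omega> * (norm (Gr s \<omega>))\<^sup>2) * (lam * Eh s \<omega> * (Sig s \<omega>)\<^sup>2)"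
      unfolding vA_def using h0 by (simp add: power2_eq_square)
    also have "\<dots> \<le> (lam * Eh s \<omega> * (norm (Gr s \<omega>))\<^sup>2) * 1"
      using k lp h0 by (intro mult_left_mono) auto
    finally have "(lam * norm (vA s \<omega>) * Sig s \<omega>)\<^sup>2 \<le> lam * (Eh s \<omega> * (norm (Gr s \<omega>))\<^sup>2)" by simp
    moreover have "vA s \<omega> \<bullet> Xi s \<omega> = - Eh s \<omega> * (Gr s \<omega> \<bullet> Xi s \<omega>)" unfolding vA_def by simp
    ultimately show "lam * (- Eh s \<omega> * (Gr s \<omega> \<bullet> Xi s \<omega>)) - lam * (Eh s \<omega> * (norm (Gr s \<omega>))\<^sup>2) / 2
          \<le> lam * (vA s \<omega> \<bullet> Xi s \<omega>) - (lam * norm (vA s \<omega>) * Sig s \<omega>)\<^sup>2 / 2" by simp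
  qed
  also have "\<dots> < ln (T / \<delta>)" using ev[OF True] t unfolding evt_def lam_def by auto
  finally have "lam * ((\<Sum>s=1..t. - Eh s \<omega> * (Gr s \<omega> \<bullet> Xi s \<omega>)) - (\<Sum>s=1..t. Eh s \<omega> * (norm (Gr s \<omega>))\<^sup>2 / 2)) < ln (T / \<delta>)"
    by (simp add: right_diff_distrib)
  then have "(\<Sum>s=1..t. - Eh s \<omega> * (Gr s \<omega> \<bullet> Xi s \<omega>)) - (\<Sum>s=1..t. Eh s \<omega> * (norm (Gr s \<omega>))\<^sup>2 / 2) < ln (T / \<delta>) / lam"
    using lp by (simp add: field_simps)
  also have "ln (T / \<delta>) / lam = \<eta> * sb * ln (T / \<delta>)" unfolding lam_def lamA_def by simp
  finally show ?thesis by simp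
next
  case False
  then have sb0: "sb = 0" using sb_nn[OF T1] by simp
  have "Xi s \<omega> = 0" if s: "s \<in> {1..t}" for s
  proof -
    have "Sig s \<omega> \<le> sb" using IH[OF s] s by (intro Sig_le) auto
    moreover have "norm (Xi s \<omega>) \<le> Sig s \<omega>" using nOK s t unfolding noiseOK_def by auto
    ultimately have "norm (Xi s \<omega>) \<le> 0" using sb0 by linarith
    then show ?thesis by simp
  qed
  then have "(\<Sum>s=1..t. - Eh s \<omega> * (Gr s \<omega> \<bullet> Xi s \<omega>)) = 0" by simp
  moreover have "(\<Sum>s=1..t. Eh s \<omega> * (norm (Gr s \<omega>))\<^sup>2 / 2) \<ge> 0"
    using Eh_pos by (intro sum_nonneg) (simp add: less_imp_le)
  ultimately show ?thesis using sb0 by simp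
qed

theorem detA:
  assumes T1: "T \<ge> 1" and nOK: "noiseOK \<omega>" and ev: "sb > 0 \<Longrightarrow> evt vA lamA \<omega>"
  shows "\<forall>t\<in>{1..T}. Dl t \<omega> \<le> FF"
proof -
  have "t \<le> T \<longrightarrow> (\<forall>s\<in>{1..t}. Dl s \<omega> \<le> FF)" for t
  proof (induction t)
    case 0 then show ?case by simp
  next
    case (Suc t)
    show ?case
    proof (intro impI ballI)
      fix s assume tT: "Suc t \<le> T" and s: "s \<in> {1..Suc t}"
      have IH: "\<And>s. s \<in> {1..t} \<Longrightarrow> Dl s \<omega> \<le> FF" using Suc.IH tT by auto
      show "Dl s \<omega> \<le> FF"
      proof (cases "s \<le> t")
        case True then show ?thesis using IH s by auto
      next
        case False
        then have ss: "s = Suc t" using s by simp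
        show ?thesis
        proof (cases "t = 0")
          case True
          then show ?thesis using ss FF_ge[OF T1] Delta1_nn unfolding Dl_def \<Delta>1_def by (simp add: W_def)
        next
          case False
          then have t1: "1 \<le> t" by simp
          have tT': "t \<le> T" using tT by simp
          have "Dl (Suc t) \<omega> - Dl 1 \<omega> = (\<Sum>s=1..t. Dl (Suc s) \<omega> - Dl s \<omega>)"
            using sum_Suc_diff[of 1 t "\<lambda>s. Dl s \<omega>"] t1 by simp
          also have "\<dots> \<le> (\<Sum>s=1..t. - Eh s \<omega> * (norm (Gr s \<omega>))\<^sup>2 / 2 + (- Eh s \<omega> * (Gr s \<omega> \<bullet> Xi s \<omega>))
               + (2 * sb / \<eta> + \<beta> / 2) * ((E s \<omega>)\<^sup>2 * (norm (g s \<omega>))\<^sup>2))"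
          proof (intro sum_mono)
            fix r assume r: "r \<in> {1..t}"
            have nz: "norm (Xi r \<omega>) \<le> Sig r \<omega>" using nOK r tT unfolding noiseOK_def by auto
            have "Sig r \<omega> \<le> sb" using IH[OF r] r by (intro Sig_le) auto
            then have "(2 * Sig r \<omega> / \<eta> + \<beta> / 2) * ((E r \<omega>)\<^sup>2 * (norm (g r \<omega>))\<^sup>2)
                \<le> (2 * sb / \<eta> + \<beta> / 2) * ((E r \<omega>)\<^sup>2 * (norm (g r \<omega>))\<^sup>2)"
              using eta_pos by (intro mult_right_mono add_right_mono divide_right_mono) auto
            then show "Dl (Suc r) \<omega> - Dl r \<omega> \<le> - Eh r \<omega> * (norm (Gr r \<omega>))\<^sup>2 / 2 + (- Eh r \<omega> * (Gr r \<omega> \<bullet> Xi r \<omega>))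
               + (2 * sb / \<eta> + \<beta> / 2) * ((E r \<omega>)\<^sup>2 * (norm (g r \<omega>))\<^sup>2)"
              using step_descent[OF _ nz] r by simp
          qed
          also have "\<dots> = - (\<Sum>s=1..t. Eh s \<omega> * (norm (Gr s \<omega>))\<^sup>2 / 2) + (\<Sum>s=1..t. - Eh s \<omega> * (Gr s \<omega> \<bullet> Xi s \<omega>))
               + (2 * sb / \<eta> + \<beta> / 2) * (\<Sum>s=1..t. (E s \<omega>)\<^sup>2 * (norm (g s \<omega>))\<^sup>2)"
            by (simp add: sum.distrib sum_distrib_left sum_negf sum_subtractf)
          also have "\<dots> \<le> - (\<Sum>s=1..t. Eh s \<omega> * (norm (Gr s \<omega>))\<^sup>2 / 2) + ((\<Sum>s=1..t. Eh s \<omega> * (norm (Gr s \<omega>))\<^sup>2 / 2) + \<eta> * sb * ln (T / \<delta>))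
               + (2 * sb / \<eta> + \<beta> / 2) * (\<eta>\<^sup>2 * C1)"
            using hsumA[OF T1 nOK ev t1 tT' IH] sumE_bound[OF nOK tT'] sb_nn[OF T1] eta_pos beta_nn
            by (intro add_mono mult_left_mono) auto
          also have "\<dots> = \<eta> * sb * (ln (T / \<delta>) + 2 * C1) + \<beta> * \<eta>\<^sup>2 * C1 / 2"
            using eta_pos by (simp add: algebra_simps power2_eq_square)
          also have "\<dots> \<le> \<eta> * sb * (L + 2 * C1) + \<beta> * \<eta>\<^sup>2 * C1 / 2"
            using ln_le_L[OF T1] eta_pos sb_nn[OF T1] by (intro add_right_mono mult_left_mono) auto
          finally have "Dl (Suc t) \<omega> \<le> \<Delta>1 + \<eta> * sb * (L + 2 * C1) + \<beta> * \<eta>\<^sup>2 * C1 / 2"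
            unfolding Dl_def \<Delta>1_def by (simp add: W_def)
          then show ?thesis using F_main[OF T1] ss by simp
        qed
      qed
    qed
  qed
  then show ?thesis by auto
qed

end



lemma pot_step:
  fixes a b P c :: real
  assumes "0 \<le> a" "a \<le> b" "P \<ge> 0" "c > 0"
  defines "\<Phi> \<equiv> \<lambda>X. min X P / c + ln ((c + max 0 (X - P)) / c)"
  shows "(b - a) / (c + max 0 (b - P)) \<le> \<Phi> b - \<Phi> a"
proof -
  define D where "D = c + max 0 (b - P)"
  define Da where "Da = c + max 0 (a - P)"
  have Dp: "D \<ge> c" "D > 0" unfolding D_def using assms by auto
  have Dap: "Da > 0" "Da \<le> D" unfolding Da_def D_def using assms by auto
  have m: "min b P - min a P \<ge> 0" using assms by (simp add: min_def)
  have 1: "(min b P - min a P) / D \<le> (min b P - min a P) / c"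
    using m Dp assms by (intro divide_left_mono) auto
  have "ln (Da / D) \<le> Da / D - 1" using Dap Dp by (intro ln_le_minus_one) auto
  then have 2: "(D - Da) / D \<le> ln D - ln Da" using Dap Dp by (simp add: ln_div field_simps)
  have "\<Phi> b - \<Phi> a = (min b P - min a P) / c + (ln D - ln Da)"
    unfolding \<Phi>_def D_def Da_def using assms Dap Dp unfolding D_def Da_def
    by (simp add: ln_div diff_divide_distrib)
  moreover have "(b - a) / D = (min b P - min a P) / D + (D - Da) / D"
    unfolding D_def Da_def by (simp add: add_divide_distrib[symmetric] min_def max_def)
  ultimately show ?thesis using 1 2 unfolding D_def[symmetric] by linarith
qed

lemma potential_bound:
  fixes x Y :: "nat \<Rightarrow> real" and c S K :: real
  assumes c: "c > 0" and S: "S \<ge> 0" and K: "K \<ge> 0"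
    and x: "\<And>s. 1 \<le> s \<Longrightarrow> s \<le> t \<Longrightarrow> 0 \<le> x s \<and> x s \<le> S"
    and Y: "\<And>s. s < t \<Longrightarrow> Y s \<ge> (\<Sum>r=1..s. x r) - K \<and> Y s \<ge> 0"
  shows "(\<Sum>s=1..t. x s / (c + Y (s - 1))) \<le> (K + S) / c + ln (1 + t * S / c)"
proof -
  define P where "P = K + S"
  define \<Phi> where "\<Phi> = (\<lambda>X. min X P / c + ln ((c + max 0 (X - P)) / c))"
  define X where "X = (\<lambda>s. (\<Sum>r=1..s. x r))"
  have P0: "P \<ge> 0" unfolding P_def using S K by simp
  have X0: "X s \<ge> 0" if "s \<le> t" for s unfolding X_def using x that by (intro sum_nonneg) auto
  have XS: "X (Suc s) = X s + x (Suc s)" for s unfolding X_def by simp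
  have tstep: "x s / (c + Y (s - 1)) \<le> \<Phi> (X s) - \<Phi> (X (s - 1))" if s: "1 \<le> s" "s \<le> t" for s
  proof -
    obtain r where r: "s = Suc r" using s by (cases s) auto
    have xs: "0 \<le> x s" "x s \<le> S" using x s by auto
    have Xs: "X s = X r + x s" unfolding r XS ..
    have Yr: "Y r \<ge> X r - K" "Y r \<ge> 0" using Y[of r] r s unfolding X_def by auto
    have "max 0 (X s - P) \<le> Y r" using Yr xs Xs unfolding P_def by (simp add: max_def)
    then have "x s / (c + Y r) \<le> x s / (c + max 0 (X s - P))"
      using xs c by (intro divide_left_mono) auto
    also have "\<dots> = (X s - X r) / (c + max 0 (X s - P))" using Xs by simp
    also have "\<dots> \<le> \<Phi> (X s) - \<Phi> (X r)" unfolding \<Phi>_def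
      using X0[of r] r s Xs xs P0 c by (intro pot_step) auto
    finally show ?thesis using r by simp
  qed
  have "(\<Sum>s=1..t. x s / (c + Y (s - 1))) \<le> (\<Sum>s=1..t. \<Phi> (X s) - \<Phi> (X (s - 1)))"
    using tstep by (intro sum_mono) auto
  also have "\<dots> = \<Phi> (X t) - \<Phi> (X 0)"
  proof (cases t)
    case 0 then show ?thesis by simp
  next
    case (Suc n)
    have "(\<Sum>s=1..t. \<Phi> (X s) - \<Phi> (X (s - 1))) = (\<Sum>s=0..n. \<Phi> (X (Suc s)) - \<Phi> (X s))"
      unfolding Suc using sum.shift_bounds_cl_Suc_ivl[of "\<lambda>s. \<Phi> (X s) - \<Phi> (X (s - 1))" 0 n] by simp
    also have "\<dots> = \<Phi> (X (Suc n)) - \<Phi> (X 0)" by (rule sum_Suc_diff) simp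
    finally show ?thesis unfolding Suc .
  qed
  also have "\<Phi> (X 0) = 0" unfolding \<Phi>_def X_def using P0 c by simp
  also have "\<Phi> (X t) \<le> P / c + ln ((c + X t) / c)"
    unfolding \<Phi>_def using P0 c X0[of t]
    by (intro add_mono divide_right_mono) (auto simp: min_def max_def intro!: divide_right_mono)
  also have "X t \<le> t * S"
  proof -
    have "X t \<le> (\<Sum>r=1..t. S)" unfolding X_def using x by (intro sum_mono) auto
    then show ?thesis by simp
  qed
  then have "ln ((c + X t) / c) \<le> ln (1 + t * S / c)"
  proof -
    have "X t / c \<le> t * S / c" using \<open>X t \<le> t * S\<close> c by (intro divide_right_mono) auto
    moreover have "0 \<le> X t / c" using X0[of t] c by simp
    ultimately show ?thesis using c by (simp add: add_divide_distrib)
  qed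
  finally show ?thesis unfolding P_def by simp
qed




lemma ln_le_2log: "y \<ge> 0 \<Longrightarrow> ln (1 + y) \<le> 2 * log 2 (1 + y / 2)"
proof -
  assume y: "y \<ge> 0"
  have "1 + y \<le> (1 + y / 2)\<^sup>2" using y by (simp add: power2_eq_square algebra_simps)
  then have "ln (1 + y) \<le> ln ((1 + y / 2)\<^sup>2)" using y by simp
  also have "\<dots> = 2 * ln (1 + y / 2)" using y by (simp add: ln_realpow)
  also have "\<dots> \<le> 2 * log 2 (1 + y / 2)" using y by (simp add: ln_le_log2)
  finally show ?thesis .
qed

context ada begin

lemma sq_sb: "T \<ge> 1 \<Longrightarrow> sb\<^sup>2 = sq" unfolding sb_def using sq_nn by simp

lemma Sig_sq_le: "T \<ge> 1 \<Longrightarrow> 1 \<le> s \<Longrightarrow> Dl s \<omega> \<le> FF \<Longrightarrow> (Sig s \<omega>)\<^sup>2 \<le> sq"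
  using Sig_le[of s \<omega>] Sig_nn[of s \<omega>] sq_sb by (metis power_mono)

lemma G_expand: "G t \<omega> = (\<Sum>s=1..t. (norm (Gr s \<omega>))\<^sup>2 + 2 * (Gr s \<omega> \<bullet> Xi s \<omega>) + (norm (Xi s \<omega>))\<^sup>2)"
proof -
  have "(norm (g s \<omega>))\<^sup>2 = (norm (Gr s \<omega>))\<^sup>2 + 2 * (Gr s \<omega> \<bullet> Xi s \<omega>) + (norm (Xi s \<omega>))\<^sup>2" for s
  proof -
    have "g s \<omega> = Gr s \<omega> + Xi s \<omega>" unfolding Xi_def by simp
    then show ?thesis by (simp add: power2_norm_eq_inner inner_add_left inner_add_right inner_commute)
  qed
  then show ?thesis unfolding G_def by simp
qed

lemma GX:
  assumes T1: "T \<ge> 1" and nOK: "noiseOK \<omega>" and DF: "\<forall>t\<in>{1..T}. Dl t \<omega> \<le> FF"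
    and ev: "sb > 0 \<Longrightarrow> evt vB lamB \<omega>" and r: "r \<le> T"
  shows "G r \<omega> \<ge> (\<Sum>s=1..r. (norm (Xi s \<omega>))\<^sup>2) - 2 * sq * ln (T / \<delta>)"
proof -
  have lnp: "ln (T / \<delta>) \<ge> 0" using T1 delta_pos delta_lt by (simp add: field_simps)
  have K0: "2 * sq * ln (T / \<delta>) \<ge> 0" using sq_nn[OF T1] lnp by simp
  show ?thesis
  proof (cases "r = 0")
    case True then show ?thesis using K0 by (simp add: G_0)
  next
    case False
    then have r1: "1 \<le> r" by simp
    show ?thesis
    proof (cases "sb > 0")
      case True
      have sqp: "sq > 0" using True sq_sb[OF T1] by (metis zero_less_power2 less_irrefl)
      define lam where "lam = lamB"
      have lp: "lam > 0" unfolding lam_def lamB_def using sqp by simp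
      have "lam * (\<Sum>s=1..r. - 2 * (Gr s \<omega> \<bullet> Xi s \<omega>) - (norm (Gr s \<omega>))\<^sup>2)
            = (\<Sum>s=1..r. lam * (- 2 * (Gr s \<omega> \<bullet> Xi s \<omega>)) - lam * (norm (Gr s \<omega>))\<^sup>2)"
        by (simp add: sum_distrib_left right_diff_distrib)
      also have "\<dots> \<le> csum vB lam r \<omega>"
        unfolding csum_def
      proof (intro sum_mono)
        fix s assume s: "s \<in> {1..r}"
        have S2: "(Sig s \<omega>)\<^sup>2 \<le> sq" using DF s r by (intro Sig_sq_le[OF T1]) auto
        have "(lam * norm (vB s \<omega>) * Sig s \<omega>)\<^sup>2 / 2 = (norm (Gr s \<omega>))\<^sup>2 * (2 * lam\<^sup>2 * (Sig s \<omega>)\<^sup>2)"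
          unfolding vB_def by (simp add: power2_eq_square)
        also have "\<dots> \<le> (norm (Gr s \<omega>))\<^sup>2 * (2 * lam\<^sup>2 * sq)"
          using S2 by (intro mult_left_mono) auto
        also have "2 * lam\<^sup>2 * sq = lam" unfolding lam_def lamB_def using sqp by (simp add: power2_eq_square)
        finally have "(lam * norm (vB s \<omega>) * Sig s \<omega>)\<^sup>2 / 2 \<le> lam * (norm (Gr s \<omega>))\<^sup>2" by (simp add: mult.commute)
        moreover have "vB s \<omega> \<bullet> Xi s \<omega> = - 2 * (Gr s \<omega> \<bullet> Xi s \<omega>)" unfolding vB_def by simp
        ultimately show "lam * (- 2 * (Gr s \<omega> \<bullet> Xi s \<omega>)) - lam * (norm (Gr s \<omega>))\<^sup>2
              \<le> lam * (vB s \<omega> \<bullet> Xi s \<omega>) - (lam * norm (vB s \<omega>) * Sig s \<omega>)\<^sup>2 / 2" by simp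
      qed
      also have "\<dots> < ln (T / \<delta>)" using ev[OF True] r r1 unfolding evt_def lam_def by auto
      finally have "(\<Sum>s=1..r. - 2 * (Gr s \<omega> \<bullet> Xi s \<omega>) - (norm (Gr s \<omega>))\<^sup>2) < ln (T / \<delta>) / lam"
        using lp by (simp add: field_simps)
      also have "ln (T / \<delta>) / lam = 2 * sq * ln (T / \<delta>)" unfolding lam_def lamB_def by simp
      finally have "(\<Sum>s=1..r. - 2 * (Gr s \<omega> \<bullet> Xi s \<omega>) - (norm (Gr s \<omega>))\<^sup>2) < 2 * sq * ln (T / \<delta>)" .
      then show ?thesis unfolding G_expand by (simp add: sum.distrib sum_subtractf sum_negf)
    next
      case False
      then have sb0: "sb = 0" using sb_nn[OF T1] by simp
      have "Xi s \<omega> = 0" if s: "s \<in> {1..r}" for s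
      proof -
        have "Sig s \<omega> \<le> sb" using DF s r by (intro Sig_le) auto
        moreover have "norm (Xi s \<omega>) \<le> Sig s \<omega>" using nOK s r unfolding noiseOK_def by auto
        ultimately have "norm (Xi s \<omega>) \<le> 0" using sb0 by linarith
        then show ?thesis by simp
      qed
      then have "(\<Sum>s=1..r. (norm (Xi s \<omega>))\<^sup>2) = 0" by simp
      then show ?thesis using G_nn[of r \<omega>] K0 by linarith
    qed
  qed
qed

theorem detB:
  assumes T1: "T \<ge> 1" and dh: "\<delta> \<le> 1 / 2" and nOK: "noiseOK \<omega>" and DF: "\<forall>t\<in>{1..T}. Dl t \<omega> \<le> FF"
    and ev: "sb > 0 \<Longrightarrow> evt vB lamB \<omega>"
  shows "\<forall>t\<in>{1..T}. (\<Sum>s=1..t. (E (s - 1) \<omega>)\<^sup>2 * (norm (Gr s \<omega> - g s \<omega>))\<^sup>2)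
           \<le> 2 * \<eta>\<^sup>2 * log 2 (1 + sq * T / (2 * \<gamma>\<^sup>2)) + 7 * (\<eta> / \<gamma>)\<^sup>2 * sq * L"
proof
  fix t assume t: "t \<in> {1..T}"
  define K where "K = 2 * sq * ln (T / \<delta>)"
  have lnp: "ln (T / \<delta>) \<ge> 0" using T1 delta_pos delta_lt by (simp add: field_simps)
  have K0: "K \<ge> 0" unfolding K_def using sq_nn[OF T1] lnp by simp
  have g2: "\<gamma>\<^sup>2 > 0" using gamma_pos by simp
  have "(\<Sum>s=1..t. (E (s - 1) \<omega>)\<^sup>2 * (norm (Gr s \<omega> - g s \<omega>))\<^sup>2)
        = \<eta>\<^sup>2 * (\<Sum>s=1..t. (norm (Xi s \<omega>))\<^sup>2 / (\<gamma>\<^sup>2 + G (s - 1) \<omega>))"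
    unfolding E_sq Xi_def by (simp add: sum_distrib_left norm_minus_commute)
  also have "\<dots> \<le> \<eta>\<^sup>2 * ((K + sq) / \<gamma>\<^sup>2 + ln (1 + t * sq / \<gamma>\<^sup>2))"
  proof (intro mult_left_mono potential_bound[OF g2 sq_nn[OF T1] K0])
    fix s assume s: "1 \<le> s" "s \<le> t"
    have "norm (Xi s \<omega>) \<le> Sig s \<omega>" using nOK s t unfolding noiseOK_def by auto
    then have "(norm (Xi s \<omega>))\<^sup>2 \<le> (Sig s \<omega>)\<^sup>2" by (intro power_mono) auto
    also have "\<dots> \<le> sq" using DF s t by (intro Sig_sq_le[OF T1]) auto
    finally show "0 \<le> (norm (Xi s \<omega>))\<^sup>2 \<and> (norm (Xi s \<omega>))\<^sup>2 \<le> sq" by simp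
  next
    fix s assume s: "s < t"
    show "(\<Sum>r=1..s. (norm (Xi r \<omega>))\<^sup>2) - K \<le> G s \<omega> \<and> 0 \<le> G s \<omega>"
      using GX[OF T1 nOK DF ev, of s] s t G_nn[of s \<omega>] unfolding K_def by auto
  qed simp
  also have "\<dots> = (\<eta> / \<gamma>)\<^sup>2 * sq * (2 * ln (T / \<delta>) + 1) + \<eta>\<^sup>2 * ln (1 + t * sq / \<gamma>\<^sup>2)"
    unfolding K_def using gamma_pos by (simp add: field_simps power2_eq_square)
  also have "\<dots> \<le> 7 * (\<eta> / \<gamma>)\<^sup>2 * sq * L + 2 * \<eta>\<^sup>2 * log 2 (1 + sq * T / (2 * \<gamma>\<^sup>2))"
  proof (rule add_mono)
    have L1: "L \<ge> 1" unfolding L_def using T1 dh delta_pos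
      by (subst le_log_iff) (auto simp: field_simps)
    have "2 * ln (T / \<delta>) + 1 \<le> 7 * L" using ln_le_L[OF T1] L1 by linarith
    then show "(\<eta> / \<gamma>)\<^sup>2 * sq * (2 * ln (T / \<delta>) + 1) \<le> 7 * (\<eta> / \<gamma>)\<^sup>2 * sq * L"
    proof -
      have "0 \<le> (\<eta> / \<gamma>)\<^sup>2 * sq" using sq_nn[OF T1] by simp
      from mult_left_mono[OF \<open>2 * ln (T / \<delta>) + 1 \<le> 7 * L\<close> this] show ?thesis by (simp add: mult_ac)
    qed
  next
    have "ln (1 + t * sq / \<gamma>\<^sup>2) \<le> ln (1 + T * sq / \<gamma>\<^sup>2)"
    proof -
      have "t * sq \<le> T * sq" using t sq_nn[OF T1] by (intro mult_right_mono) auto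
      then have "t * sq / \<gamma>\<^sup>2 \<le> T * sq / \<gamma>\<^sup>2" using g2 by (intro divide_right_mono) auto
      moreover have "0 \<le> t * sq / \<gamma>\<^sup>2" using sq_nn[OF T1] by simp
      ultimately show ?thesis by simp
    qed
    also have "\<dots> \<le> 2 * log 2 (1 + (T * sq / \<gamma>\<^sup>2) / 2)"
      using sq_nn[OF T1] g2 by (intro ln_le_2log) simp
    also have "(T * sq / \<gamma>\<^sup>2) / 2 = sq * T / (2 * \<gamma>\<^sup>2)" by (simp add: mult_ac)
    finally show "\<eta>\<^sup>2 * ln (1 + t * sq / \<gamma>\<^sup>2) \<le> 2 * \<eta>\<^sup>2 * log 2 (1 + sq * T / (2 * \<gamma>\<^sup>2))"
    proof -
      assume a: "ln (1 + t * sq / \<gamma>\<^sup>2) \<le> 2 * log 2 (1 + sq * T / (2 * \<gamma>\<^sup>2))"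
      have "\<eta>\<^sup>2 * ln (1 + t * sq / \<gamma>\<^sup>2) \<le> \<eta>\<^sup>2 * (2 * log 2 (1 + sq * T / (2 * \<gamma>\<^sup>2)))"
        using a by (intro mult_left_mono) auto
      then show ?thesis by (simp add: mult_ac)
    qed
  qed
  finally show "(\<Sum>s=1..t. (E (s - 1) \<omega>)\<^sup>2 * (norm (Gr s \<omega> - g s \<omega>))\<^sup>2)
           \<le> 2 * \<eta>\<^sup>2 * log 2 (1 + sq * T / (2 * \<gamma>\<^sup>2)) + 7 * (\<eta> / \<gamma>)\<^sup>2 * sq * L" by simp
qed

end



context ada begin

abbreviation "H u \<equiv> hist M g u"

definition "genH u = (\<Union>s\<in>{1..<u}. {g s -` A \<inter> space M | A. A \<in> sets borel})"

lemma genH_Pow: "genH u \<subseteq> Pow (space M)" unfolding genH_def by auto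

lemma hist_eq: "H u = sigma (space M) (genH u)" unfolding hist_def genH_def ..

lemma space_H[simp]: "space (H u) = space M"
  unfolding hist_eq by (rule space_measure_of_conv)

lemma sets_H: "sets (H u) = sigma_sets (space M) (genH u)"
  unfolding hist_eq by (rule sets_measure_of[OF genH_Pow])

lemma g_H: "1 \<le> s \<Longrightarrow> s < u \<Longrightarrow> g s \<in> borel_measurable (H u)"
proof (rule measurableI)
  fix A :: "'a set" assume "1 \<le> s" "s < u" "A \<in> sets borel"
  then have "g s -` A \<inter> space M \<in> genH u" unfolding genH_def by (intro UN_I[of s]) auto
  then show "g s -` A \<inter> space (H u) \<in> sets (H u)" unfolding sets_H by auto
qed simp

lemma H_sub: "u \<le> Suc T \<Longrightarrow> subalgebra M (H u)"
proof -
  assume u: "u \<le> Suc T"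
  have "genH u \<subseteq> sets M"
  proof
    fix X assume "X \<in> genH u"
    then obtain s A where s: "s \<in> {1..<u}" and A: "A \<in> sets borel" and X: "X = g s -` A \<inter> space M"
      unfolding genH_def by auto
    have "g s \<in> borel_measurable M" using s u by (intro g_meas) auto
    then show "X \<in> sets M" unfolding X using A by (rule measurable_sets)
  qed
  then have "sigma_sets (space M) (genH u) \<subseteq> sets M" by (rule sets.sigma_sets_subset)
  then show ?thesis unfolding subalgebra_def sets_H by simp
qed

lemma grad_meas[measurable]: "grad \<in> borel_measurable borel"
proof (rule borel_measurable_continuous_onI)
  have "\<beta>-lipschitz_on UNIV grad"
    using smooth beta_nn by (intro lipschitz_onI) (auto simp: dist_norm)
  then show "continuous_on UNIV grad" by (rule lipschitz_on_continuous_on)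
qed

lemma G_H: "t < u \<Longrightarrow> G t \<in> borel_measurable (H u)"
proof -
  assume tu: "t < u"
  have "(\<lambda>\<omega>. \<Sum>s\<in>{1..t}. (norm (g s \<omega>))\<^sup>2) \<in> borel_measurable (H u)"
  proof (rule borel_measurable_sum)
    fix s assume "s \<in> {1..t}"
    then have [measurable]: "g s \<in> borel_measurable (H u)" using tu by (intro g_H) auto
    show "(\<lambda>\<omega>. (norm (g s \<omega>))\<^sup>2) \<in> borel_measurable (H u)" by measurable
  qed
  then show ?thesis unfolding G_def[abs_def] .
qed

lemma E_H: "t < u \<Longrightarrow> E t \<in> borel_measurable (H u)"
proof -
  assume "t < u"
  then have [measurable]: "G t \<in> borel_measurable (H u)" by (rule G_H)
  have "E t = (\<lambda>\<omega>. \<eta> / sqrt (\<gamma>\<^sup>2 + G t \<omega>))" using E_def' by auto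
  also have "\<dots> \<in> borel_measurable (H u)" by measurable
  finally show ?thesis .
qed

lemma W_H: "1 \<le> t \<Longrightarrow> t \<le> u \<Longrightarrow> W t \<in> borel_measurable (H u)"
proof (induction t rule: dec_induct)
  case base
  have "W 1 = (\<lambda>_. w1)" using W_1 by auto
  then show ?case by simp
next
  case (step t)
  then have tu: "t < u" by simp
  have [measurable]: "W t \<in> borel_measurable (H u)" using step tu by simp
  have [measurable]: "E t \<in> borel_measurable (H u)" using tu by (rule E_H)
  have [measurable]: "g t \<in> borel_measurable (H u)" using tu step(1) by (intro g_H) auto
  have "W (Suc t) = (\<lambda>\<omega>. W t \<omega> - E t \<omega> *\<^sub>R g t \<omega>)" using W_Suc[OF step(1)] by auto
  also have "\<dots> \<in> borel_measurable (H u)" by measurable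
  finally show ?case .
qed

lemma Gr_H: "1 \<le> t \<Longrightarrow> t \<le> u \<Longrightarrow> Gr t \<in> borel_measurable (H u)"
proof -
  assume "1 \<le> t" "t \<le> u"
  then have [measurable]: "W t \<in> borel_measurable (H u)" by (rule W_H)
  show ?thesis unfolding Gr_def[abs_def] by measurable
qed

lemma Sig_H: "1 \<le> t \<Longrightarrow> t \<le> u \<Longrightarrow> Sig t \<in> borel_measurable (H u)"
proof -
  assume "1 \<le> t" "t \<le> u"
  then have [measurable]: "Gr t \<in> borel_measurable (H u)" by (rule Gr_H)
  show ?thesis unfolding Sig_def[abs_def] by measurable
qed

lemma Eh_H: "1 \<le> t \<Longrightarrow> t \<le> u \<Longrightarrow> Eh t \<in> borel_measurable (H u)"
proof -
  assume a: "1 \<le> t" "t \<le> u"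
  then have [measurable]: "Gr t \<in> borel_measurable (H u)" "Sig t \<in> borel_measurable (H u)"
    by (auto intro: Gr_H Sig_H)
  have [measurable]: "G (t - 1) \<in> borel_measurable (H u)" using a by (intro G_H) auto
  show ?thesis unfolding Eh_def[abs_def] by measurable
qed

lemma Xi_H: "1 \<le> t \<Longrightarrow> t < u \<Longrightarrow> Xi t \<in> borel_measurable (H u)"
proof -
  assume a: "1 \<le> t" "t < u"
  then have [measurable]: "Gr t \<in> borel_measurable (H u)" "g t \<in> borel_measurable (H u)"
    by (auto intro: Gr_H g_H)
  show ?thesis unfolding Xi_def[abs_def] by measurable
qed

lemma vA_H: "1 \<le> t \<Longrightarrow> t \<le> u \<Longrightarrow> vA t \<in> borel_measurable (H u)"
proof -
  assume a: "1 \<le> t" "t \<le> u"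
  then have [measurable]: "Gr t \<in> borel_measurable (H u)" "Eh t \<in> borel_measurable (H u)"
    by (auto intro: Gr_H Eh_H)
  show ?thesis unfolding vA_def[abs_def] by measurable
qed

lemma vB_H: "1 \<le> t \<Longrightarrow> t \<le> u \<Longrightarrow> vB t \<in> borel_measurable (H u)"
proof -
  assume a: "1 \<le> t" "t \<le> u"
  then have [measurable]: "Gr t \<in> borel_measurable (H u)" by (auto intro: Gr_H)
  show ?thesis unfolding vB_def[abs_def] by measurable
qed

lemma to_M: "u \<le> Suc T \<Longrightarrow> h \<in> borel_measurable (H u) \<Longrightarrow> h \<in> borel_measurable M"
  by (rule measurable_from_subalg[OF H_sub])

end



sublocale ada \<subseteq> P: prob_space M by (rule prob)

context ada begin

lemma intg_bdd: "h \<in> borel_measurable M \<Longrightarrow> AE \<omega> in M. \<bar>h \<omega>\<bar> \<le> B \<Longrightarrow> integrable M (h :: 'b \<Rightarrow> real)"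
  by (rule Bochner_Integration.integrable_bound[of M "\<lambda>_. B"]) (auto elim!: eventually_mono)

definition "BG = norm (grad w1) + \<beta> * \<eta> * T"
definition "BS = \<sigma>0 + \<sigma>1 * BG"

lemma BG_nn: "BG \<ge> 0" unfolding BG_def using beta_nn eta_pos by simp

lemma Gr_bnd: "1 \<le> s \<Longrightarrow> s \<le> T \<Longrightarrow> norm (Gr s \<omega>) \<le> BG"
proof -
  assume s: "1 \<le> s" "s \<le> T"
  have "norm (Gr s \<omega>) \<le> norm (grad w1) + \<beta> * \<eta> * (real s - 1)" by (rule Gr_bound[OF s(1)])
  also have "\<dots> \<le> BG" unfolding BG_def using s beta_nn eta_pos
    by (intro add_left_mono mult_left_mono) auto
  finally show ?thesis .
qed

lemma Sig_bnd: "1 \<le> s \<Longrightarrow> s \<le> T \<Longrightarrow> Sig s \<omega> \<le> BS"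
proof -
  assume s: "1 \<le> s" "s \<le> T"
  have "Sig s \<omega> \<le> sqrt (\<sigma>0\<^sup>2) + sqrt (\<sigma>1\<^sup>2 * (norm (Gr s \<omega>))\<^sup>2)"
    unfolding Sig_def by (intro sqrt_add_le_add_sqrt) auto
  also have "\<dots> = \<sigma>0 + \<sigma>1 * norm (Gr s \<omega>)" using s0_nn s1_nn by (simp add: real_sqrt_mult)
  also have "\<dots> \<le> BS" unfolding BS_def using Gr_bnd[OF s] s1_nn by (intro add_left_mono mult_left_mono) auto
  finally show ?thesis .
qed

lemma BS_nn: "BS \<ge> 0" unfolding BS_def using BG_nn s0_nn s1_nn by simp

lemma AE_noise: "AE \<omega> in M. noiseOK \<omega>"
proof -
  have "AE \<omega> in M. \<forall>t\<in>{1..T}. norm (Xi t \<omega>) \<le> Sig t \<omega>"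
  proof (rule AE_finite_allI)
    fix t assume t: "t \<in> {1..T}"
    show "AE \<omega> in M. norm (Xi t \<omega>) \<le> Sig t \<omega>"
      using noise[OF t]
    proof (rule eventually_mono)
      fix \<omega> assume "(norm (g t \<omega> - grad (ada_w \<eta> \<gamma> w1 g t \<omega>)))\<^sup>2 \<le> \<sigma>0\<^sup>2 + \<sigma>1\<^sup>2 * (norm (grad (ada_w \<eta> \<gamma> w1 g t \<omega>)))\<^sup>2"
      then have "(norm (Xi t \<omega>))\<^sup>2 \<le> (Sig t \<omega>)\<^sup>2" unfolding Sig_sq Xi_def Gr_def W_def .
      then show "norm (Xi t \<omega>) \<le> Sig t \<omega>" using Sig_nn by (rule power2_le_imp_le)
    qed
  qed simp
  then show ?thesis unfolding noiseOK_def .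
qed

lemma mart:
  assumes t: "t \<in> {1..T}" and K: "K \<in> borel_measurable (H t)" and Kb: "AE \<omega> in M. \<bar>K \<omega>\<bar> \<le> B"
  shows "(\<integral>\<omega>. K \<omega> * (Xi t \<omega> \<bullet> u) \<partial>M) = 0"
proof -
  have tT: "t \<le> Suc T" using t by simp
  have sub: "subalgebra M (H t)" by (rule H_sub[OF tT])
  have "finite_measure_subalgebra M (H t)"
    by (intro finite_measure_subalgebra.intro finite_measure_subalgebra_axioms.intro sub P.finite_measure_axioms)
  then interpret S: sigma_finite_subalgebra M "H t" by (rule finite_measure_subalgebra_is_sigma_finite)
  have KM[measurable]: "K \<in> borel_measurable M" by (rule to_M[OF tT K])
  have gM[measurable]: "g t \<in> borel_measurable M" using t by (rule g_meas)
  have GrM[measurable]: "Gr t \<in> borel_measurable M" using t by (intro to_M[OF tT] Gr_H) auto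
  have int1: "integrable M (\<lambda>\<omega>. K \<omega> * (g t \<omega> \<bullet> u))"
  proof (rule Bochner_Integration.integrable_bound[of M "\<lambda>\<omega>. \<bar>B\<bar> * (g t \<omega> \<bullet> u)"])
    show "integrable M (\<lambda>\<omega>. \<bar>B\<bar> * (g t \<omega> \<bullet> u))" using g_int[OF t] by auto
    show "(\<lambda>\<omega>. K \<omega> * (g t \<omega> \<bullet> u)) \<in> borel_measurable M" by measurable
    show "AE \<omega> in M. norm (K \<omega> * (g t \<omega> \<bullet> u)) \<le> norm (\<bar>B\<bar> * (g t \<omega> \<bullet> u))"
      using Kb by eventually_elim (auto simp: abs_mult intro!: mult_right_mono)
  qed
  have eq1: "(\<integral>\<omega>. K \<omega> * real_cond_exp M (H t) (\<lambda>\<omega>. g t \<omega> \<bullet> u) \<omega> \<partial>M) = (\<integral>\<omega>. K \<omega> * (g t \<omega> \<bullet> u) \<partial>M)"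
    by (rule S.real_cond_exp_intg(2)[OF int1 K]) measurable
  have rceM[measurable]: "real_cond_exp M (H t) (\<lambda>\<omega>. g t \<omega> \<bullet> u) \<in> borel_measurable M"
    by (rule to_M[OF tT]) simp
  have eq2: "(\<integral>\<omega>. K \<omega> * real_cond_exp M (H t) (\<lambda>\<omega>. g t \<omega> \<bullet> u) \<omega> \<partial>M) = (\<integral>\<omega>. K \<omega> * (Gr t \<omega> \<bullet> u) \<partial>M)"
  proof (rule integral_cong_AE)
    show "AE \<omega> in M. K \<omega> * real_cond_exp M (H t) (\<lambda>\<omega>. g t \<omega> \<bullet> u) \<omega> = K \<omega> * (Gr t \<omega> \<bullet> u)"
      using unbiased[OF t, of u] by eventually_elim (simp add: Gr_def W_def)
  qed measurable
  have int2: "integrable M (\<lambda>\<omega>. K \<omega> * (Gr t \<omega> \<bullet> u))"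
  proof (rule intg_bdd[where B = "\<bar>B\<bar> * (BG * norm u)"])
    show "AE \<omega> in M. \<bar>K \<omega> * (Gr t \<omega> \<bullet> u)\<bar> \<le> \<bar>B\<bar> * (BG * norm u)"
      using Kb
    proof eventually_elim
      case (elim \<omega>)
      have "\<bar>Gr t \<omega> \<bullet> u\<bar> \<le> norm (Gr t \<omega>) * norm u" by (rule Cauchy_Schwarz_ineq2)
      also have "\<dots> \<le> BG * norm u" using Gr_bnd[of t \<omega>] t by (intro mult_right_mono) auto
      finally have "\<bar>Gr t \<omega> \<bullet> u\<bar> \<le> BG * norm u" .
      then show ?case using elim by (simp add: abs_mult mult_mono)
    qed
  qed measurable
  have "(\<integral>\<omega>. K \<omega> * (Xi t \<omega> \<bullet> u) \<partial>M) = (\<integral>\<omega>. K \<omega> * (g t \<omega> \<bullet> u) - K \<omega> * (Gr t \<omega> \<bullet> u) \<partial>M)"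
    unfolding Xi_def by (simp add: inner_diff_left right_diff_distrib)
  also have "\<dots> = (\<integral>\<omega>. K \<omega> * (g t \<omega> \<bullet> u) \<partial>M) - (\<integral>\<omega>. K \<omega> * (Gr t \<omega> \<bullet> u) \<partial>M)"
    by (rule Bochner_Integration.integral_diff[OF int1 int2])
  also have "\<dots> = 0" using eq1 eq2 by simp
  finally show ?thesis .
qed

end



definition "chh (a::real) = (exp a + exp (- a)) / 2"
definition "kk (a::real) = ((exp a - exp (- a)) / 2) / a"

lemma exp_le_ch:
  fixes z a :: real
  assumes "\<bar>z\<bar> \<le> a"
  shows "exp z \<le> chh a + z * kk a"
proof (cases "a = 0")
  case True
  then show ?thesis using assms by (simp add: chh_def kk_def)
next
  case False
  then have ap: "a > 0" using assms by simp
  define t where "t = (a + z) / (2 * a)"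
  have t01: "0 \<le> t" "t \<le> 1" unfolding t_def using assms ap by (auto simp: field_simps abs_le_iff)
  have "exp ((1 - t) *\<^sub>R (- a) + t *\<^sub>R a) \<le> (1 - t) * exp (- a) + t * exp a"
    using convex_onD[OF exp_convex t01, of "- a" a] by simp
  moreover have "(1 - t) *\<^sub>R (- a) + t *\<^sub>R a = z" unfolding t_def using ap by (simp add: field_simps)
  moreover have "(1 - t) * exp (- a) + t * exp a = chh a + z * kk a"
    unfolding t_def chh_def kk_def using ap by (simp add: field_simps)
  ultimately show ?thesis by simp
qed

lemma ch_le: "a \<ge> 0 \<Longrightarrow> exp (- a\<^sup>2 / 2) * chh a \<le> 1"
proof -
  assume a: "a \<ge> 0"
  have "- (2 * a) * (1 / 2) + ln (1 + (1 / 2) * (exp (2 * a) - 1)) \<le> (2 * a)\<^sup>2 / 8"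
    using Hoeffdings_lemma_aux[of "2 * a" "1 / 2"] a by simp
  then have "ln ((1 + exp (2 * a)) / 2) \<le> a + a\<^sup>2 / 2"
    by (simp add: power2_eq_square field_simps)
  moreover have "(1 + exp (2 * a)) / 2 > 0" by (simp add: add_pos_pos)
  ultimately have "(1 + exp (2 * a)) / 2 \<le> exp (a + a\<^sup>2 / 2)"
    by (metis exp_le_cancel_iff exp_ln)
  moreover have "chh a = exp (- a) * ((1 + exp (2 * a)) / 2)"
    unfolding chh_def by (simp add: field_simps exp_add[symmetric])
  ultimately have "chh a \<le> exp (- a) * exp (a + a\<^sup>2 / 2)"
    by (metis exp_gt_zero mult_left_mono less_imp_le)
  also have "\<dots> = exp (a\<^sup>2 / 2)" by (simp add: exp_add[symmetric])
  finally show ?thesis by (simp add: exp_minus field_simps)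
qed

lemma kk_bnd: "a \<ge> 0 \<Longrightarrow> 0 \<le> kk a \<and> kk a \<le> exp a"
proof (cases "a = 0")
  case True then show ?thesis by (simp add: kk_def)
next
  case False
  assume a: "a \<ge> 0"
  then have ap: "a > 0" using False by simp
  have "1 - 2 * a \<le> exp (- 2 * a)" using exp_ge_add_one_self[of "- 2 * a"] by simp
  then have "exp a * (1 - 2 * a) \<le> exp a * exp (- 2 * a)" by (intro mult_left_mono) auto
  also have "exp a * exp (- 2 * a) = exp (- a)" by (simp add: exp_add[symmetric])
  finally have "exp a - exp (- a) \<le> 2 * a * exp a" by (simp add: algebra_simps)
  then have "kk a \<le> exp a" unfolding kk_def using ap by (simp add: field_simps)
  moreover have "exp (- a) \<le> exp a" using a by simp
  then have "0 \<le> kk a" unfolding kk_def using ap by simp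
  ultimately show ?thesis by simp
qed

lemma exp_step:
  fixes z a :: real
  assumes "\<bar>z\<bar> \<le> a"
  shows "exp (z - a\<^sup>2 / 2) \<le> 1 + exp (- a\<^sup>2 / 2) * kk a * z"
proof -
  have a0: "a \<ge> 0" using assms by simp
  have "exp (z - a\<^sup>2 / 2) = exp (- a\<^sup>2 / 2) * exp z" by (simp add: exp_add[symmetric])
  also have "\<dots> \<le> exp (- a\<^sup>2 / 2) * (chh a + z * kk a)" using exp_le_ch[OF assms] by simp
  also have "\<dots> = exp (- a\<^sup>2 / 2) * chh a + exp (- a\<^sup>2 / 2) * kk a * z" by (simp add: algebra_simps)
  also have "\<dots> \<le> 1 + exp (- a\<^sup>2 / 2) * kk a * z" using ch_le[OF a0] by simp
  finally show ?thesis .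
qed




context ada begin

lemma csum_Suc: "csum v lam (Suc t) \<omega> = csum v lam t \<omega> +
   (lam * (v (Suc t) \<omega> \<bullet> Xi (Suc t) \<omega>) - (lam * norm (v (Suc t) \<omega>) * Sig (Suc t) \<omega>)\<^sup>2 / 2)"
  by (simp add: csum_def)

lemma csum_H:
  assumes vH: "\<And>s u. 1 \<le> s \<Longrightarrow> s \<le> u \<Longrightarrow> v s \<in> borel_measurable (H u)" and tu: "t < u"
  shows "csum v lam t \<in> borel_measurable (H u)"
proof -
  have "(\<lambda>\<omega>. \<Sum>s\<in>{1..t}. lam * (v s \<omega> \<bullet> Xi s \<omega>) - (lam * norm (v s \<omega>) * Sig s \<omega>)\<^sup>2 / 2) \<in> borel_measurable (H u)"
  proof (rule borel_measurable_sum)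
    fix s assume s: "s \<in> {1..t}"
    then have [measurable]: "v s \<in> borel_measurable (H u)" "Xi s \<in> borel_measurable (H u)" "Sig s \<in> borel_measurable (H u)"
      using tu by (auto intro: vH Xi_H Sig_H)
    show "(\<lambda>\<omega>. lam * (v s \<omega> \<bullet> Xi s \<omega>) - (lam * norm (v s \<omega>) * Sig s \<omega>)\<^sup>2 / 2) \<in> borel_measurable (H u)"
      by measurable
  qed
  then show ?thesis unfolding csum_def[abs_def] .
qed

lemma csum_M:
  assumes vH: "\<And>s u. 1 \<le> s \<Longrightarrow> s \<le> u \<Longrightarrow> v s \<in> borel_measurable (H u)" and t: "t \<le> T"
  shows "csum v lam t \<in> borel_measurable M"
  using t by (intro to_M[of "Suc t"] csum_H[OF vH]) auto

lemma csum_bnd: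
  assumes vb: "\<And>s \<omega>. 1 \<le> s \<Longrightarrow> s \<le> T \<Longrightarrow> norm (v s \<omega>) \<le> BV" and lam: "lam \<ge> 0"
    and nOK: "noiseOK \<omega>" and t: "t \<le> T"
  shows "csum v lam t \<omega> \<le> t * (lam * BV * BS)"
proof -
  have "csum v lam t \<omega> \<le> (\<Sum>s=1..t. lam * BV * BS)"
    unfolding csum_def
  proof (intro sum_mono)
    fix s assume s: "s \<in> {1..t}"
    have "v s \<omega> \<bullet> Xi s \<omega> \<le> norm (v s \<omega>) * norm (Xi s \<omega>)" by (rule norm_cauchy_schwarz)
    also have "\<dots> \<le> BV * BS"
    proof (rule mult_mono)
      have vbs: "norm (v s \<omega>) \<le> BV" using vb[of s \<omega>] s t by auto
      then show "norm (v s \<omega>) \<le> BV" .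
      have "norm (Xi s \<omega>) \<le> Sig s \<omega>" using nOK s t unfolding noiseOK_def by auto
      then show "norm (Xi s \<omega>) \<le> BS" using Sig_bnd[of s \<omega>] s t by auto
      show "0 \<le> BV" using vbs norm_ge_zero[of "v s \<omega>"] by linarith
    qed simp
    finally have "lam * (v s \<omega> \<bullet> Xi s \<omega>) \<le> lam * (BV * BS)" using lam by (intro mult_left_mono)
    then have 1: "lam * (v s \<omega> \<bullet> Xi s \<omega>) \<le> lam * BV * BS" by (simp add: mult.assoc)
    have 2: "0 \<le> (lam * norm (v s \<omega>) * Sig s \<omega>)\<^sup>2 / 2" by simp
    from 1 2 show "lam * (v s \<omega> \<bullet> Xi s \<omega>) - (lam * norm (v s \<omega>) * Sig s \<omega>)\<^sup>2 / 2 \<le> lam * BV * BS"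
      by linarith
  qed
  then show ?thesis by simp
qed

lemma conc_int:
  assumes lam: "lam \<ge> 0"
    and vH: "\<And>s u. 1 \<le> s \<Longrightarrow> s \<le> u \<Longrightarrow> v s \<in> borel_measurable (H u)"
    and vb: "\<And>s \<omega>. 1 \<le> s \<Longrightarrow> s \<le> T \<Longrightarrow> norm (v s \<omega>) \<le> BV"
  shows "t \<le> T \<Longrightarrow> integrable M (\<lambda>\<omega>. exp (csum v lam t \<omega>)) \<and> (\<integral>\<omega>. exp (csum v lam t \<omega>) \<partial>M) \<le> 1"
proof (induction t)
  case 0
  have "(\<lambda>\<omega>. exp (csum v lam 0 \<omega>)) = (\<lambda>_. 1)" by (simp add: csum_def)
  then show ?case by (simp add: P.prob_space)
next
  case (Suc t)
  define r where "r = Suc t"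
  have rT: "r \<le> T" "1 \<le> r" "r \<in> {1..T}" using Suc.prems unfolding r_def by auto
  have IH: "integrable M (\<lambda>\<omega>. exp (csum v lam t \<omega>))" "(\<integral>\<omega>. exp (csum v lam t \<omega>) \<partial>M) \<le> 1"
    using Suc by auto
  define A where "A = lam * BV * BS"
  define CQ where "CQ = exp (t * A)"
  define Q where "Q = (\<lambda>\<omega>. exp (csum v lam t \<omega>))"
  define a where "a = (\<lambda>\<omega>. lam * norm (v r \<omega>) * Sig r \<omega>)"
  define z where "z = (\<lambda>\<omega>. lam * (v r \<omega> \<bullet> Xi r \<omega>))"
  define Kf where "Kf = (\<lambda>\<omega>. Q \<omega> * exp (- (a \<omega>)\<^sup>2 / 2) * kk (a \<omega>))"
  have "t < r" unfolding r_def by simp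
  have [measurable]: "csum v lam t \<in> borel_measurable (H r)" by (rule csum_H[OF vH \<open>t < r\<close>])
  have [measurable]: "v r \<in> borel_measurable (H r)" "Sig r \<in> borel_measurable (H r)"
    using rT by (auto intro: vH Sig_H)
  have QH[measurable]: "Q \<in> borel_measurable (H r)" unfolding Q_def by measurable
  have aH[measurable]: "a \<in> borel_measurable (H r)" unfolding a_def by measurable
  have KfH[measurable]: "Kf \<in> borel_measurable (H r)" unfolding Kf_def kk_def by measurable
  have rT1: "r \<le> Suc T" using rT by simp
  have KfM[measurable]: "Kf \<in> borel_measurable M" by (rule to_M[OF rT1 KfH])
  have XiM[measurable]: "Xi r \<in> borel_measurable M" using rT by (intro to_M[of "Suc r"] Xi_H) auto
  have vM[measurable]: "v r \<in> borel_measurable M" using rT by (intro to_M[OF rT1] vH) auto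
  have zM[measurable]: "z \<in> borel_measurable M" unfolding z_def by measurable
  have BV0: "BV \<ge> 0" using vb[of r undefined] rT by (meson norm_ge_zero order_trans)
  have A0: "A \<ge> 0" unfolding A_def using lam BV0 BS_nn by simp
  have AEs: "AE \<omega> in M. 0 \<le> a \<omega> \<and> a \<omega> \<le> A \<and> \<bar>z \<omega>\<bar> \<le> a \<omega> \<and> Q \<omega> \<le> CQ"
    using AE_noise
  proof eventually_elim
    case (elim \<omega>)
    have nz: "norm (Xi r \<omega>) \<le> Sig r \<omega>" using elim rT unfolding noiseOK_def by auto
    have "norm (v r \<omega>) * Sig r \<omega> \<le> BV * BS"
      using vb[of r \<omega>] rT Sig_bnd[of r \<omega>] Sig_nn[of r \<omega>] BV0 by (intro mult_mono) auto
    then have aA: "a \<omega> \<le> A" unfolding a_def A_def using lam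
      by (simp add: mult.assoc mult_left_mono)
    have za: "\<bar>z \<omega>\<bar> \<le> a \<omega>"
    proof -
      have "\<bar>v r \<omega> \<bullet> Xi r \<omega>\<bar> \<le> norm (v r \<omega>) * norm (Xi r \<omega>)" by (rule Cauchy_Schwarz_ineq2)
      also have "\<dots> \<le> norm (v r \<omega>) * Sig r \<omega>" using nz by (intro mult_left_mono) auto
      finally show ?thesis unfolding z_def a_def using lam by (simp add: abs_mult mult.assoc mult_left_mono)
    qed
    have tT: "t \<le> T" using rT unfolding r_def by simp
    have QC: "Q \<omega> \<le> CQ" unfolding Q_def CQ_def A_def using csum_bnd[OF vb lam elim tT] by simp
    have "0 \<le> a \<omega>" unfolding a_def using lam Sig_nn by simp
    then show ?case using aA za QC by simp
  qed
  have Kfb: "AE \<omega> in M. \<bar>Kf \<omega>\<bar> \<le> CQ * exp A"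
    using AEs
  proof eventually_elim
    case (elim \<omega>)
    have "\<bar>Kf \<omega>\<bar> = Q \<omega> * exp (- (a \<omega>)\<^sup>2 / 2) * kk (a \<omega>)"
      unfolding Kf_def Q_def using kk_bnd[of "a \<omega>"] elim by (simp add: abs_mult)
    also have "\<dots> \<le> CQ * 1 * exp A"
    proof (intro mult_mono)
      show "Q \<omega> \<le> CQ" using elim by simp
      show "exp (- (a \<omega>)\<^sup>2 / 2) \<le> 1" by simp
      show "kk (a \<omega>) \<le> exp A" using elim kk_bnd[of "a \<omega>"] by (meson exp_le_cancel_iff order_trans)
      show "0 \<le> CQ" unfolding CQ_def by simp
    qed (use elim kk_bnd[of "a \<omega>"] in \<open>auto simp: Q_def CQ_def\<close>)
    finally show ?case by simp
  qed
  have Qr: "(\<lambda>\<omega>. exp (csum v lam r \<omega>)) = (\<lambda>\<omega>. Q \<omega> * exp (z \<omega> - (a \<omega>)\<^sup>2 / 2))"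
    unfolding Q_def z_def a_def r_def csum_Suc by (simp add: exp_add)
  have ptw: "AE \<omega> in M. exp (csum v lam r \<omega>) \<le> Q \<omega> + Kf \<omega> * z \<omega>"
    using AEs
  proof eventually_elim
    case (elim \<omega>)
    have "Q \<omega> * exp (z \<omega> - (a \<omega>)\<^sup>2 / 2) \<le> Q \<omega> * (1 + exp (- (a \<omega>)\<^sup>2 / 2) * kk (a \<omega>) * z \<omega>)"
      using exp_step[of "z \<omega>" "a \<omega>"] elim unfolding Q_def by (intro mult_left_mono) auto
    then show ?case using Qr unfolding Kf_def by (simp add: fun_eq_iff algebra_simps)
  qed
  have intQr: "integrable M (\<lambda>\<omega>. exp (csum v lam r \<omega>))"
  proof (rule intg_bdd[where B = "exp (r * A)"])
    show "(\<lambda>\<omega>. exp (csum v lam r \<omega>)) \<in> borel_measurable M"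
      using csum_M[OF vH rT(1)] by measurable
    show "AE \<omega> in M. \<bar>exp (csum v lam r \<omega>)\<bar> \<le> exp (r * A)"
      using AE_noise by eventually_elim (use csum_bnd[OF vb lam _ rT(1)] in \<open>simp add: A_def\<close>)
  qed
  have intKz: "integrable M (\<lambda>\<omega>. Kf \<omega> * z \<omega>)"
  proof (rule intg_bdd[where B = "CQ * exp A * A"])
    show "AE \<omega> in M. \<bar>Kf \<omega> * z \<omega>\<bar> \<le> CQ * exp A * A"
      using AEs Kfb by eventually_elim (auto simp: abs_mult intro!: mult_mono)
  qed measurable
  have zero: "(\<integral>\<omega>. Kf \<omega> * z \<omega> \<partial>M) = 0"
  proof -
    define Ki where "Ki = (\<lambda>i \<omega>. lam * Kf \<omega> * (v r \<omega> \<bullet> i))"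
    have eq: "Kf \<omega> * z \<omega> = (\<Sum>i\<in>Basis. Ki i \<omega> * (Xi r \<omega> \<bullet> i))" for \<omega>
      unfolding z_def Ki_def by (subst euclidean_inner) (simp add: sum_distrib_left mult_ac)
    have KiH: "Ki i \<in> borel_measurable (H r)" for i unfolding Ki_def by measurable
    have Kib: "AE \<omega> in M. \<bar>Ki i \<omega>\<bar> \<le> lam * (CQ * exp A) * BV" if i: "i \<in> Basis" for i
      using Kfb
    proof eventually_elim
      case (elim \<omega>)
      have "\<bar>v r \<omega> \<bullet> i\<bar> \<le> norm (v r \<omega>) * norm i" by (rule Cauchy_Schwarz_ineq2)
      also have "\<dots> \<le> BV" using vb[of r \<omega>] rT i by simp
      finally have vi: "\<bar>v r \<omega> \<bullet> i\<bar> \<le> BV" .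
      have "\<bar>Kf \<omega>\<bar> * \<bar>v r \<omega> \<bullet> i\<bar> \<le> (CQ * exp A) * BV"
        using elim vi by (intro mult_mono) (auto simp: CQ_def)
      then have "lam * (\<bar>Kf \<omega>\<bar> * \<bar>v r \<omega> \<bullet> i\<bar>) \<le> lam * ((CQ * exp A) * BV)"
        using lam by (intro mult_left_mono)
      then show ?case unfolding Ki_def using lam by (simp add: abs_mult mult.assoc)
    qed
    have intg: "integrable M (\<lambda>\<omega>. Ki i \<omega> * (Xi r \<omega> \<bullet> i))" if i: "i \<in> Basis" for i
    proof (rule intg_bdd[where B = "lam * (CQ * exp A) * BV * BS"])
      show "(\<lambda>\<omega>. Ki i \<omega> * (Xi r \<omega> \<bullet> i)) \<in> borel_measurable M"
        using to_M[OF rT1 KiH[of i]] by measurable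
      show "AE \<omega> in M. \<bar>Ki i \<omega> * (Xi r \<omega> \<bullet> i)\<bar> \<le> lam * (CQ * exp A) * BV * BS"
        using Kib[OF i] AE_noise
      proof eventually_elim
        case (elim \<omega>)
        have "\<bar>Xi r \<omega> \<bullet> i\<bar> \<le> norm (Xi r \<omega>) * norm i" by (rule Cauchy_Schwarz_ineq2)
        also have "\<dots> \<le> BS" using elim rT i Sig_bnd[of r \<omega>] unfolding noiseOK_def by force
        finally show ?case using elim by (simp add: abs_mult mult_mono)
      qed
    qed
    have "(\<integral>\<omega>. Kf \<omega> * z \<omega> \<partial>M) = (\<integral>\<omega>. (\<Sum>i\<in>Basis. Ki i \<omega> * (Xi r \<omega> \<bullet> i)) \<partial>M)"
      by (simp add: eq)
    also have "\<dots> = (\<Sum>i\<in>Basis. \<integral>\<omega>. Ki i \<omega> * (Xi r \<omega> \<bullet> i) \<partial>M)"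
      by (rule Bochner_Integration.integral_sum) (rule intg)
    also have "\<dots> = 0"
      using mart[OF rT(3) KiH Kib] by simp
    finally show ?thesis .
  qed
  have "(\<integral>\<omega>. exp (csum v lam r \<omega>) \<partial>M) \<le> (\<integral>\<omega>. Q \<omega> + Kf \<omega> * z \<omega> \<partial>M)"
    by (rule Bochner_Integration.integral_mono_AE[OF intQr _ ptw]) (use IH(1) intKz in \<open>simp add: Q_def\<close>)
  also have "\<dots> = (\<integral>\<omega>. Q \<omega> \<partial>M) + (\<integral>\<omega>. Kf \<omega> * z \<omega> \<partial>M)"
    by (rule Bochner_Integration.integral_add) (use IH(1) intKz in \<open>simp_all add: Q_def\<close>)
  also have "\<dots> \<le> 1" using IH(2) zero unfolding Q_def by simp
  finally show ?case using intQr unfolding r_def by simp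
qed

end



context ada begin

lemma conc_prob:
  assumes lam: "lam \<ge> 0"
    and vH: "\<And>s u. 1 \<le> s \<Longrightarrow> s \<le> u \<Longrightarrow> v s \<in> borel_measurable (H u)"
    and vb: "\<And>s \<omega>. 1 \<le> s \<Longrightarrow> s \<le> T \<Longrightarrow> norm (v s \<omega>) \<le> BV"
    and t: "t \<le> T"
  shows "measure M {\<omega>\<in>space M. c \<le> csum v lam t \<omega>} \<le> exp (- c)"
proof -
  have ci: "integrable M (\<lambda>\<omega>. exp (csum v lam t \<omega>))" "(\<integral>\<omega>. exp (csum v lam t \<omega>) \<partial>M) \<le> 1"
    using conc_int[OF lam vH vb t] by auto
  have "{\<omega>\<in>space M. c \<le> csum v lam t \<omega>} = {\<omega>\<in>space M. exp c \<le> exp (csum v lam t \<omega>)}" by simp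
  also have "measure M \<dots> \<le> (\<integral>\<omega>. exp (csum v lam t \<omega>) \<partial>M) / exp c"
    by (rule integral_Markov_inequality_measure[OF ci(1), of "space M"]) auto
  also have "\<dots> \<le> 1 / exp c" using ci(2) by (intro divide_right_mono) auto
  also have "\<dots> = exp (- c)" by (simp add: exp_minus field_simps)
  finally show ?thesis .
qed

lemma evt_sets:
  assumes vH: "\<And>s u. 1 \<le> s \<Longrightarrow> s \<le> u \<Longrightarrow> v s \<in> borel_measurable (H u)"
  shows "{\<omega>\<in>space M. \<not> evt v lam \<omega>} = (\<Union>t\<in>{1..T}. {\<omega>\<in>space M. ln (T / \<delta>) \<le> csum v lam t \<omega>})"
    and "{\<omega>\<in>space M. \<not> evt v lam \<omega>} \<in> sets M"
proof -
  show eq: "{\<omega>\<in>space M. \<not> evt v lam \<omega>} = (\<Union>t\<in>{1..T}. {\<omega>\<in>space M. ln (T / \<delta>) \<le> csum v lam t \<omega>})"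
    unfolding evt_def by (auto simp: not_less)
  have "{\<omega>\<in>space M. ln (T / \<delta>) \<le> csum v lam t \<omega>} \<in> sets M" if t: "t \<in> {1..T}" for t
  proof -
    have [measurable]: "csum v lam t \<in> borel_measurable M" using t by (intro csum_M[OF vH]) auto
    show ?thesis by measurable
  qed
  then show "{\<omega>\<in>space M. \<not> evt v lam \<omega>} \<in> sets M" unfolding eq by auto
qed

lemma fail_prob:
  assumes T1: "T \<ge> 1" and lam: "lam \<ge> 0"
    and vH: "\<And>s u. 1 \<le> s \<Longrightarrow> s \<le> u \<Longrightarrow> v s \<in> borel_measurable (H u)"
    and vb: "\<And>s \<omega>. 1 \<le> s \<Longrightarrow> s \<le> T \<Longrightarrow> norm (v s \<omega>) \<le> BV"
  shows "measure M {\<omega>\<in>space M. \<not> evt v lam \<omega>} \<le> \<delta>"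
proof -
  have "measure M {\<omega>\<in>space M. \<not> evt v lam \<omega>} = measure M (\<Union>t\<in>{1..T}. {\<omega>\<in>space M. ln (T / \<delta>) \<le> csum v lam t \<omega>})"
    using evt_sets(1)[OF vH] by simp
  also have "\<dots> \<le> (\<Sum>t\<in>{1..T}. measure M {\<omega>\<in>space M. ln (T / \<delta>) \<le> csum v lam t \<omega>})"
  proof (rule measure_UNION_le)
    fix t assume t: "t \<in> {1..T}"
    have [measurable]: "csum v lam t \<in> borel_measurable M" using t by (intro csum_M[OF vH]) auto
    show "{\<omega>\<in>space M. ln (T / \<delta>) \<le> csum v lam t \<omega>} \<in> sets M" by measurable
  qed simp
  also have "\<dots> \<le> (\<Sum>t\<in>{1..T}. exp (- ln (T / \<delta>)))"
    by (intro sum_mono conc_prob[OF lam vH vb]) auto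
  also have "\<dots> = T * (\<delta> / T)" using T1 delta_pos by (simp add: exp_minus)
  also have "\<dots> = \<delta>" using T1 by simp
  finally show ?thesis .
qed

lemma Eh_le: "Eh s \<omega> \<le> \<eta> / \<gamma>"
proof -
  have "\<gamma> \<le> sqrt (\<gamma>\<^sup>2 + G (s - 1) \<omega> + (norm (Gr s \<omega>))\<^sup>2 + (Sig s \<omega>)\<^sup>2)"
    using gamma_pos G_nn[of "s - 1" \<omega>] by (intro real_le_rsqrt) simp
  moreover have "0 < sqrt (\<gamma>\<^sup>2 + G (s - 1) \<omega> + (norm (Gr s \<omega>))\<^sup>2 + (Sig s \<omega>)\<^sup>2) * \<gamma>"
  proof -
    have "0 < sqrt (\<gamma>\<^sup>2 + G (s - 1) \<omega> + (norm (Gr s \<omega>))\<^sup>2 + (Sig s \<omega>)\<^sup>2)"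
      using calculation gamma_pos by linarith
    then show ?thesis using gamma_pos by simp
  qed
  ultimately show ?thesis unfolding Eh_def using eta_pos gamma_pos by (intro divide_left_mono) auto
qed

lemma vA_bnd: "1 \<le> s \<Longrightarrow> s \<le> T \<Longrightarrow> norm (vA s \<omega>) \<le> \<eta> / \<gamma> * BG"
proof -
  assume s: "1 \<le> s" "s \<le> T"
  have "Eh s \<omega> * norm (Gr s \<omega>) \<le> \<eta> / \<gamma> * BG"
    using Eh_pos[of s \<omega>] Eh_le[of s \<omega>] Gr_bnd[OF s, of \<omega>] BG_nn by (intro mult_mono) auto
  then show ?thesis unfolding vA_def using Eh_pos[of s \<omega>] by simp
qed

lemma vB_bnd: "1 \<le> s \<Longrightarrow> s \<le> T \<Longrightarrow> norm (vB s \<omega>) \<le> 2 * BG"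
  unfolding vB_def using Gr_bnd[of s \<omega>] by simp

definition "LHS t \<omega> = (\<Sum>s=1..t. (E (s - 1) \<omega>)\<^sup>2 * (norm (Gr s \<omega> - g s \<omega>))\<^sup>2)"
definition "RHS = 2 * \<eta>\<^sup>2 * log 2 (1 + sq * T / (2 * \<gamma>\<^sup>2)) + 7 * (\<eta> / \<gamma>)\<^sup>2 * sq * L"

lemma LHS_M: "t \<le> T \<Longrightarrow> LHS t \<in> borel_measurable M"
proof -
  assume t: "t \<le> T"
  have "(\<lambda>\<omega>. \<Sum>s\<in>{1..t}. (E (s - 1) \<omega>)\<^sup>2 * (norm (Gr s \<omega> - g s \<omega>))\<^sup>2) \<in> borel_measurable (H (Suc t))"
  proof (rule borel_measurable_sum)
    fix s assume s: "s \<in> {1..t}"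
    then have [measurable]: "E (s - 1) \<in> borel_measurable (H (Suc t))" "Gr s \<in> borel_measurable (H (Suc t))"
      "g s \<in> borel_measurable (H (Suc t))"
      by (auto intro: E_H Gr_H g_H)
    show "(\<lambda>\<omega>. (E (s - 1) \<omega>)\<^sup>2 * (norm (Gr s \<omega> - g s \<omega>))\<^sup>2) \<in> borel_measurable (H (Suc t))" by measurable
  qed
  then show ?thesis unfolding LHS_def[abs_def] using t by (intro to_M[of "Suc t"]) auto
qed

theorem main: "measure M {\<omega>\<in>space M. \<forall>t\<in>{1..T}. LHS t \<omega> \<le> RHS} \<ge> 1 - 2 * \<delta>"
proof -
  define Tg where "Tg = {\<omega>\<in>space M. \<forall>t\<in>{1..T}. LHS t \<omega> \<le> RHS}"
  have TgM: "Tg \<in> sets M"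
  proof -
    have [measurable]: "Measurable.pred M (\<lambda>\<omega>. \<forall>t\<in>{1..T}. LHS t \<omega> \<le> RHS)"
    proof (rule pred_intros_finite(3))
      fix t assume "t \<in> {1..T}"
      then have [measurable]: "LHS t \<in> borel_measurable M" by (intro LHS_M) auto
      show "Measurable.pred M (\<lambda>\<omega>. LHS t \<omega> \<le> RHS)" by measurable
    qed simp
    show ?thesis unfolding Tg_def by measurable
  qed
  show ?thesis
  proof (cases "T \<ge> 1 \<and> \<delta> \<le> 1 / 2")
    case False
    then have "\<not> T \<ge> 1 \<or> \<not> \<delta> \<le> 1 / 2" by auto
    then show ?thesis
    proof
      assume "\<not> T \<ge> 1"
      then have "Tg = space M" unfolding Tg_def by auto
      then have "measure M Tg = 1" by (simp add: P.prob_space)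
      then show ?thesis using delta_pos unfolding Tg_def by simp
    next
      assume "\<not> \<delta> \<le> 1 / 2"
      moreover have "0 \<le> measure M {\<omega>\<in>space M. \<forall>t\<in>{1..T}. LHS t \<omega> \<le> RHS}" by (rule measure_nonneg)
      ultimately show ?thesis by linarith
    qed
  next
    case True
    then have T1: "T \<ge> 1" and dh: "\<delta> \<le> 1 / 2" by auto
    obtain N where N: "{\<omega>\<in>space M. \<not> noiseOK \<omega>} \<subseteq> N" "N \<in> null_sets M"
      using AE_noise by (auto elim!: AE_E)
    define FA where "FA = (if sb > 0 then {\<omega>\<in>space M. \<not> evt vA lamA \<omega>} else {})"
    define FB where "FB = (if sb > 0 then {\<omega>\<in>space M. \<not> evt vB lamB \<omega>} else {})"
    have lamA0: "lamA \<ge> 0" unfolding lamA_def using eta_pos sb_nn[OF T1] by simp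
    have lamB0: "lamB \<ge> 0" unfolding lamB_def using sq_nn[OF T1] by simp
    have FAs: "FA \<in> sets M" unfolding FA_def using evt_sets(2)[OF vA_H] by simp
    have FBs: "FB \<in> sets M" unfolding FB_def using evt_sets(2)[OF vB_H] by simp
    have FAm: "measure M FA \<le> \<delta>" unfolding FA_def
      using fail_prob[OF T1 lamA0 vA_H vA_bnd] delta_pos by simp
    have FBm: "measure M FB \<le> \<delta>" unfolding FB_def
      using fail_prob[OF T1 lamB0 vB_H vB_bnd] delta_pos by simp
    have Ns: "N \<in> sets M" "measure M N = 0" using N(2) by (auto simp: null_sets_def measure_def)
    have sub: "space M - Tg \<subseteq> N \<union> FA \<union> FB"
    proof
      fix \<omega> assume \<omega>: "\<omega> \<in> space M - Tg"
      show "\<omega> \<in> N \<union> FA \<union> FB"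
      proof (rule ccontr)
        assume "\<omega> \<notin> N \<union> FA \<union> FB"
        then have nOK: "noiseOK \<omega>" and eA: "sb > 0 \<Longrightarrow> evt vA lamA \<omega>" and eB: "sb > 0 \<Longrightarrow> evt vB lamB \<omega>"
          using \<omega> N(1) unfolding FA_def FB_def by auto
        have DF: "\<forall>t\<in>{1..T}. Dl t \<omega> \<le> FF" by (rule detA[OF T1 nOK eA])
        have "\<forall>t\<in>{1..T}. LHS t \<omega> \<le> RHS" unfolding LHS_def RHS_def by (rule detB[OF T1 dh nOK DF eB])
        then show False using \<omega> unfolding Tg_def by auto
      qed
    qed
    have "measure M (space M - Tg) \<le> measure M (N \<union> FA \<union> FB)"
      using sub Ns FAs FBs by (intro P.finite_measure_mono) auto
    also have "\<dots> \<le> measure M N + measure M FA + measure M FB"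
    proof -
      have "measure M (N \<union> FA \<union> FB) \<le> measure M (N \<union> FA) + measure M FB"
        using Ns FAs FBs by (intro measure_Un_le) auto
      moreover have "measure M (N \<union> FA) \<le> measure M N + measure M FA"
        using Ns FAs by (intro measure_Un_le) auto
      ultimately show ?thesis by simp
    qed
    also have "\<dots> \<le> 2 * \<delta>" using Ns FAm FBm by simp
    finally have "measure M (space M - Tg) \<le> 2 * \<delta>" .
    moreover have "measure M (space M - Tg) = 1 - measure M Tg" using P.prob_compl[OF TgM] .
    ultimately show ?thesis unfolding Tg_def by simp
  qed
qed

end


theorem lemma16:
  fixes M :: "'b measure"
    and f :: "'a::euclidean_space \<Rightarrow> real" and grad :: "'a \<Rightarrow> 'a"
    and g :: "nat \<Rightarrow> 'b \<Rightarrow> 'a"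
    and w1 :: 'a
    and \<beta> fstar \<eta> \<gamma> \<sigma>0 \<sigma>1 \<delta> :: real and T :: nat
  assumes "prob_space M"
    and grad: "\<And>x. (f has_derivative (\<lambda>h. grad x \<bullet> h)) (at x)"
    and smooth: "\<And>x y. norm (grad x - grad y) \<le> \<beta> * norm (x - y)"
    and fstar_le: "\<And>x. fstar \<le> f x" and fstar_attained: "\<exists>x. f x = fstar"
    and "\<eta> > 0" and "\<gamma> > 0" and "\<sigma>0 \<ge> 0" and "\<sigma>1 \<ge> 0"
    and "0 < \<delta>" and "\<delta> < 1"
    and g_meas: "\<And>t. t \<in> {1..T} \<Longrightarrow> g t \<in> borel_measurable M"
    and g_int: "\<And>t. t \<in> {1..T} \<Longrightarrow> integrable M (g t)"
    and unbiased: "\<And>t u. t \<in> {1..T} \<Longrightarrow>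
        AE \<omega> in M. real_cond_exp M (hist M g t) (\<lambda>\<omega>. g t \<omega> \<bullet> u) \<omega>
                     = grad (ada_w \<eta> \<gamma> w1 g t \<omega>) \<bullet> u"
    and noise: "\<And>t. t \<in> {1..T} \<Longrightarrow>
        AE \<omega> in M. (norm (g t \<omega> - grad (ada_w \<eta> \<gamma> w1 g t \<omega>)))\<^sup>2
                     \<le> \<sigma>0\<^sup>2 + \<sigma>1\<^sup>2 * (norm (grad (ada_w \<eta> \<gamma> w1 g t \<omega>)))\<^sup>2"
  shows "let \<Delta>1 = f w1 - fstar;
             C1 = log 2 (1 + (2 * \<sigma>0\<^sup>2 * T + 8 * (1 + \<sigma>1\<^sup>2) * (\<eta>\<^sup>2 * \<beta>\<^sup>2 * T ^ 3 + \<beta> * \<Delta>1 * T)) / \<gamma>\<^sup>2);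
             L = log 2 (T / \<delta>);
             F = 2 * \<Delta>1 + (3 * L + 4 * C1) * \<eta> * \<sigma>0
                 + (9 * L\<^sup>2 + 16 * C1\<^sup>2) * \<eta>\<^sup>2 * \<beta> * \<sigma>1\<^sup>2 + \<eta>\<^sup>2 * \<beta> * C1;
             \<sigma>sq = \<sigma>0\<^sup>2 + 2 * \<beta> * \<sigma>1\<^sup>2 * F
         in measure M {\<omega> \<in> space M. \<forall>t\<in>{1..T}.
               (\<Sum>s=1..t. (ada_eta \<eta> \<gamma> g (s - 1) \<omega>)\<^sup>2
                           * (norm (grad (ada_w \<eta> \<gamma> w1 g s \<omega>) - g s \<omega>))\<^sup>2)
               \<le> 2 * \<eta>\<^sup>2 * log 2 (1 + \<sigma>sq * T / (2 * \<gamma>\<^sup>2))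
                 + 7 * (\<eta> / \<gamma>)\<^sup>2 * \<sigma>sq * L}
            \<ge> 1 - 2 * \<delta>"
proof -
  interpret ada M f grad g w1 \<beta> fstar \<eta> \<gamma> \<sigma>0 \<sigma>1 \<delta> T
    by (rule ada.intro) (fact assms)+
  note X = main[unfolded LHS_def RHS_def E_def Gr_def W_def sq_def FF_def C1_def L_def \<Delta>1_def]
  show ?thesis unfolding Let_def using X .
qed

end
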